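(* Let $k\ge 1$ and let $p_k$ denote the fraction of the $k!$ permutation matrices $P$ of size $k\times k$ for which $\operatorname{sat}(n,P)=O(1)$ (i.e. $\operatorname{sat}(n,P)$ is bounded by a constant depending only on $P$, for all $n$). Then $p_k\to 1$ as $k\to\infty$; that is, almost all $k\times k$ permutation matrices $P$ have $\operatorname{sat}(n,P)=O(1)$.
   Context: A 0-1 matrix $A$ contains a 0-1 matrix $P$ if some submatrix of $A$ (obtained by selecting a subset of rows and a subset of columns, keeping their order) is equal to $P$ or can be turned into $P$ by changing some ones to zeroes; otherwise $A$ avoids $P$. A 0-1 matrix $A$ is saturating for $P$ if $A$ avoids $P$ but changing any zero entry of $A$ to a one creates a copy of $P$ (i.e. the resulting matrix contains $P$). The saturation function $\operatorname{sat}(n,P)$ is the minimum number of ones in an $n\times n$ 0-1 matrix that is saturating for $P$. *)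

theory Defs
  imports "HOL-Combinatorics.Permutations" Complex_Main
begin

text \<open>A 0-1 matrix of size m x n is represented by the set of positions of its ones,
  a subset of {..<m} x {..<n} (rows and columns indexed from 0).\<close>

definition is_01_matrix :: "nat \<Rightarrow> nat \<Rightarrow> (nat \<times> nat) set \<Rightarrow> bool" where
  "is_01_matrix m n A \<longleftrightarrow> A \<subseteq> {..<m} \<times> {..<n}"

definition contains :: "nat \<Rightarrow> nat \<Rightarrow> (nat \<times> nat) set \<Rightarrow> nat \<Rightarrow> nat \<Rightarrow> (nat \<times> nat) set \<Rightarrow> bool" where
  "contains m n A pr pc P \<longleftrightarrow>
     (\<exists>r c. strict_mono_on {..<pr} r \<and> strict_mono_on {..<pc} c \<and>
            r ` {..<pr} \<subseteq> {..<m} \<and> c ` {..<pc} \<subseteq> {..<n} \<and>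
            (\<forall>(i, j) \<in> P. (r i, c j) \<in> A))"

definition saturating :: "nat \<Rightarrow> (nat \<times> nat) set \<Rightarrow> nat \<Rightarrow> (nat \<times> nat) set \<Rightarrow> bool" where
  "saturating n A k P \<longleftrightarrow>
     is_01_matrix n n A \<and> \<not> contains n n A k k P \<and>
     (\<forall>x \<in> ({..<n} \<times> {..<n}) - A. contains n n (insert x A) k k P)"

definition sat :: "nat \<Rightarrow> nat \<Rightarrow> (nat \<times> nat) set \<Rightarrow> nat" where
  "sat n k P = (LEAST m. \<exists>A. saturating n A k P \<and> card A = m)"

definition perm_matrix :: "nat \<Rightarrow> (nat \<Rightarrow> nat) \<Rightarrow> (nat \<times> nat) set" where
  "perm_matrix k \<sigma> = {(i, \<sigma> i) | i. i < k}"

definition sat_bounded :: "nat \<Rightarrow> (nat \<times> nat) set \<Rightarrow> bool" where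
  "sat_bounded k P \<longleftrightarrow> (\<exists>C. \<forall>n. sat n k P \<le> C)"

end

theory Submission
  imports Defs "HOL-Combinatorics.Multiset_Permutations" "HOL-Real_Asymp.Real_Asymp"
begin

lemma smono_gap:
  fixes r :: "nat \<Rightarrow> nat"
  assumes "strict_mono_on {..<k} r" "i \<le> j" "j < k"
  shows "r i + (j - i) \<le> r j"
  using assms(2,3)
proof (induction j rule: dec_induct)
  case base
  then show ?case by simp
next
  case (step n)
  have "r n < r (Suc n)" using assms(1) step by (auto intro: strict_mono_onD)
  then show ?case using step by auto
qed

lemma smono_inj:
  fixes r :: "nat \<Rightarrow> nat"
  assumes "strict_mono_on {..<k} r" "i < k" "j < k" "r i = r j"
  shows "i = j"
proof (rule ccontr)
  assume "i \<noteq> j"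
  then consider "i < j" | "j < i" by linarith
  then show False
  proof cases
    case 1 then have "r i < r j" using assms by (intro strict_mono_onD[OF assms(1)]) auto
    then show False using assms(4) by simp
  next
    case 2 then have "r j < r i" using assms by (intro strict_mono_onD[OF assms(1)]) auto
    then show False using assms(4) by simp
  qed
qed

lemma smono_less_iff:
  fixes r :: "nat \<Rightarrow> nat"
  assumes "strict_mono_on {..<k} r" "i < k" "j < k"
  shows "r i < r j \<longleftrightarrow> i < j"
proof
  assume h: "r i < r j"
  show "i < j"
  proof (rule ccontr)
    assume "\<not> i < j"
    then have "j < i \<or> j = i" by linarith
    then show False
    proof
      assume "j < i" then have "r j < r i" using assms by (intro strict_mono_onD[OF assms(1)]) auto
      then show False using h by simp
    next
      assume "j = i" then show False using h by simp
    qed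
  qed
next
  assume "i < j" then show "r i < r j" using assms by (intro strict_mono_onD[OF assms(1)]) auto
qed

definition emb :: "(nat \<times> nat) set \<Rightarrow> (nat \<Rightarrow> nat) \<Rightarrow> nat \<Rightarrow> (nat \<Rightarrow> nat) \<Rightarrow> (nat \<Rightarrow> nat) \<Rightarrow> bool" where
  "emb A \<sigma> k r c \<longleftrightarrow> strict_mono_on {..<k} r \<and> strict_mono_on {..<k} c \<and> (\<forall>i<k. (r i, c (\<sigma> i)) \<in> A)"

lemma perm_lt: "\<sigma> permutes {..<k} \<Longrightarrow> i < k \<Longrightarrow> \<sigma> i < k"
  by (metis lessThan_iff permutes_in_image)

lemma perm_surj: "\<sigma> permutes {..<k} \<Longrightarrow> j < k \<Longrightarrow> \<exists>i<k. \<sigma> i = j"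
  by (metis lessThan_iff permutes_inverses(1) permutes_in_image permutes_inv)

lemma perm_inj: "\<sigma> permutes {..<k} \<Longrightarrow> \<sigma> i = \<sigma> j \<Longrightarrow> i = j"
  by (meson permutes_inj injD)

lemma contains_perm_iff:
  assumes "\<sigma> permutes {..<k}" "A \<subseteq> {..<m} \<times> {..<n}"
  shows "contains m n A k k (perm_matrix k \<sigma>) \<longleftrightarrow> (\<exists>r c. emb A \<sigma> k r c)"
proof
  assume "contains m n A k k (perm_matrix k \<sigma>)"
  then obtain r c where "strict_mono_on {..<k} r" "strict_mono_on {..<k} c"
    "\<forall>(i, j) \<in> perm_matrix k \<sigma>. (r i, c j) \<in> A"
    unfolding contains_def by blast
  then show "\<exists>r c. emb A \<sigma> k r c" unfolding emb_def perm_matrix_def by blast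
next
  assume "\<exists>r c. emb A \<sigma> k r c"
  then obtain r c where e: "emb A \<sigma> k r c" by blast
  have "r ` {..<k} \<subseteq> {..<m}"
  proof
    fix x assume "x \<in> r ` {..<k}"
    then obtain i where "i < k" "x = r i" by auto
    then have "(r i, c (\<sigma> i)) \<in> A" using e unfolding emb_def by auto
    then show "x \<in> {..<m}" using assms(2) \<open>x = r i\<close> by auto
  qed
  moreover have "c ` {..<k} \<subseteq> {..<n}"
  proof
    fix x assume "x \<in> c ` {..<k}"
    then obtain j where "j < k" "x = c j" by auto
    then obtain i where "i < k" "\<sigma> i = j" using perm_surj[OF assms(1)] by blast
    then have "(r i, c (\<sigma> i)) \<in> A" using e unfolding emb_def by auto
    then show "x \<in> {..<n}" using assms(2) \<open>x = c j\<close> \<open>\<sigma> i = j\<close> by auto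
  qed
  ultimately show "contains m n A k k (perm_matrix k \<sigma>)"
    using e unfolding contains_def emb_def perm_matrix_def by blast
qed

lemma contains_mono:
  assumes "contains m n A pr pc P" "A \<subseteq> B" "m \<le> m'" "n \<le> n'"
  shows "contains m' n' B pr pc P"
proof -
  obtain r c where h: "strict_mono_on {..<pr} r" "strict_mono_on {..<pc} c"
    "r ` {..<pr} \<subseteq> {..<m}" "c ` {..<pc} \<subseteq> {..<n}" "\<forall>(i, j) \<in> P. (r i, c j) \<in> A"
    using assms(1) unfolding contains_def by blast
  have "r ` {..<pr} \<subseteq> {..<m'}" using h(3) assms(3) by auto
  moreover have "c ` {..<pc} \<subseteq> {..<n'}" using h(4) assms(4) by auto
  moreover have "\<forall>(i, j) \<in> P. (r i, c j) \<in> B" using h(5) assms(2) by auto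
  ultimately show ?thesis using h(1,2) unfolding contains_def by blast
qed

definition colb :: "nat \<Rightarrow> nat \<Rightarrow> nat \<Rightarrow> nat" where
  "colb k b v = (if v+1 < b then k+v else if v+1 = b then 2*k else if v = b then 2*k+1
      else if v = b+1 then 2*k+2 else 2*k+3+v)"

definition colt :: "nat \<Rightarrow> nat \<Rightarrow> nat \<Rightarrow> nat" where
  "colt k a v = (if v+1 < a then v else if v+1 = a then 2*k else if v = a then 2*k+1
      else if v = a+1 then 2*k+2 else 3*k+3+v)"

definition Hg :: "nat \<Rightarrow> (nat \<Rightarrow> nat) \<Rightarrow> (nat \<times> nat) set" where
  "Hg k \<tau> = {(i, colb k (\<tau> (k-1)) (\<tau> i)) | i. i < k-1} \<union>
            {(k-1+i, colt k (\<tau> 0) (\<tau> i)) | i. 0 < i \<and> i < k}"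

definition Fam :: "nat \<Rightarrow> nat \<Rightarrow> nat set set" where
  "Fam k t = (\<lambda>(a,m,d). {a..<a+t+m} - {a+d..<a+d+m}) ` ({..k-t} \<times> {..2::nat} \<times> {..t})"

definition badmid :: "nat \<Rightarrow> (nat \<Rightarrow> nat) \<Rightarrow> bool" where
  "badmid k \<tau> \<longleftrightarrow> (\<exists>t. 2 \<le> t \<and> t+2 \<le> k \<and> \<tau> ` {..<t} \<in> Fam k t)"

definition cornerfree :: "nat \<Rightarrow> (nat \<Rightarrow> nat) \<Rightarrow> bool" where
  "cornerfree k \<tau> \<longleftrightarrow> \<tau> 0 \<noteq> 0 \<and> \<tau> 0 \<noteq> k-1 \<and> \<tau> (k-1) \<noteq> 0 \<and> \<tau> (k-1) \<noteq> k-1"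

lemma colb_mono: "v < w \<Longrightarrow> w < k \<Longrightarrow> colb k b v < colb k b w"
  unfolding colb_def by auto

lemma colt_mono: "v < w \<Longrightarrow> w < k \<Longrightarrow> colt k a v < colt k a w"
  unfolding colt_def by auto

lemma colb_smono: "strict_mono_on {..<k} (colb k b)"
  by (intro strict_mono_onI) (auto intro: colb_mono)

lemma colt_smono: "strict_mono_on {..<k} (colt k a)"
  by (intro strict_mono_onI) (auto intro: colt_mono)

lemma colb_range: "v < k \<Longrightarrow> v \<noteq> b \<Longrightarrow> k \<le> colb k b v \<and> colb k b v < 3*k+3 \<and> colb k b v \<noteq> 2*k+1"
  unfolding colb_def by auto

lemma colt_range: "v < k \<Longrightarrow> v \<noteq> a \<Longrightarrow>
   (colt k a v < k \<or> colt k a v = 2*k \<or> colt k a v = 2*k+2 \<or> 3*k+3 \<le> colt k a v) \<and>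
   colt k a v \<noteq> 2*k+1 \<and> colt k a v \<le> 4*k+2"
  unfolding colt_def by auto

lemma colb_vals: "1 \<le> b \<Longrightarrow> colb k b (b-1) = 2*k" "colb k b b = 2*k+1" "colb k b (b+1) = 2*k+2"
  unfolding colb_def by auto

lemma colt_vals: "1 \<le> a \<Longrightarrow> colt k a (a-1) = 2*k" "colt k a a = 2*k+1" "colt k a (a+1) = 2*k+2"
  unfolding colt_def by auto

lemma Hg_cases:
  assumes "(p, q) \<in> Hg k \<tau>"
  shows "(p < k-1 \<and> q = colb k (\<tau> (k-1)) (\<tau> p)) \<or>
         (\<exists>j. 0 < j \<and> j < k \<and> p = k-1+j \<and> q = colt k (\<tau> 0) (\<tau> j))"
  using assms unfolding Hg_def by auto

lemma down_closed:
  fixes T :: "nat set"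
  assumes "T \<subseteq> {..<k}" "\<And>i i'. i \<in> T \<Longrightarrow> i' < i \<Longrightarrow> i' \<in> T"
  shows "T = {..<card T}"
proof (cases "T = {}")
  case True then show ?thesis by simp
next
  case False
  have fin: "finite T" using assms(1) finite_subset by blast
  define M where "M = Max T"
  have "T = {..M}"
  proof
    show "T \<subseteq> {..M}" using fin M_def by auto
    show "{..M} \<subseteq> T"
    proof
      fix x assume "x \<in> {..M}"
      moreover have "M \<in> T" using fin False M_def by simp
      ultimately show "x \<in> T" using assms(2) by (cases "x = M") auto
    qed
  qed
  then show ?thesis by (simp add: lessThan_Suc_atMost[symmetric])
qed

lemma convex_interval:
  fixes S :: "nat set"
  assumes "finite S" "S \<noteq> {}" "\<And>a b u. a \<in> S \<Longrightarrow> b \<in> S \<Longrightarrow> a < u \<Longrightarrow> u < b \<Longrightarrow> u \<in> S"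
  shows "S = {Min S..<Max S + 1}"
proof
  show "S \<subseteq> {Min S..<Max S + 1}" using assms(1) by (auto simp: less_Suc_eq_le)
  show "{Min S..<Max S + 1} \<subseteq> S"
  proof
    fix u assume u: "u \<in> {Min S..<Max S + 1}"
    have m1: "Min S \<in> S" "Max S \<in> S" using assms(1,2) by auto
    show "u \<in> S"
    proof (cases "u = Min S \<or> u = Max S")
      case True then show ?thesis using m1 by auto
    next
      case False
      then show ?thesis using u m1 assms(3)[of "Min S" "Max S" u] by auto
    qed
  qed
qed

lemma H_avoid:
  assumes perm: "\<tau> permutes {..<k}" and k4: "4 \<le> k" and cf: "cornerfree k \<tau>"
    and nb: "\<not> badmid k \<tau>" and e: "emb (Hg k \<tau>) \<tau> k r c"
  shows False
proof -
  define \<alpha> where "\<alpha> = \<tau> 0"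
  define \<beta> where "\<beta> = \<tau> (k-1)"
  have rs: "strict_mono_on {..<k} r" and cs: "strict_mono_on {..<k} c"
    and mem: "\<And>i. i < k \<Longrightarrow> (r i, c (\<tau> i)) \<in> Hg k \<tau>"
    using e unfolding emb_def by auto
  have HC: "(r i < k-1 \<and> c (\<tau> i) = colb k \<beta> (\<tau> (r i))) \<or>
      (\<exists>j. 0 < j \<and> j < k \<and> r i = k-1+j \<and> c (\<tau> i) = colt k \<alpha> (\<tau> j))" if "i < k" for i
    using Hg_cases[OF mem[OF that]] unfolding \<alpha>_def \<beta>_def by blast
  have tl: "\<And>i. i < k \<Longrightarrow> \<tau> i < k" using perm_lt[OF perm] .
  have ti: "\<And>i j. \<tau> i = \<tau> j \<Longrightarrow> i = j" using perm_inj[OF perm] .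
  have cf': "\<alpha> \<noteq> 0" "\<alpha> \<noteq> k-1" "\<beta> \<noteq> 0" "\<beta> \<noteq> k-1"
    using cf unfolding cornerfree_def \<alpha>_def \<beta>_def by auto
  have \<alpha>k: "\<alpha> < k" and \<beta>k: "\<beta> < k" using tl k4 unfolding \<alpha>_def \<beta>_def by auto
  have cne: "c u \<noteq> 2*k+1" if uk: "u < k" for u
  proof -
    obtain i where i: "i < k" "\<tau> i = u" using perm_surj[OF perm uk] by blast
    from HC[OF i(1)] show ?thesis
    proof
      assume h: "r i < k-1 \<and> c (\<tau> i) = colb k \<beta> (\<tau> (r i))"
      have "\<tau> (r i) \<noteq> \<beta>" unfolding \<beta>_def using h ti by force
      moreover have "\<tau> (r i) < k" using tl h by auto
      ultimately show ?thesis using colb_range[of "\<tau> (r i)" k \<beta>] h i by auto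
    next
      assume "\<exists>j. 0 < j \<and> j < k \<and> r i = k-1+j \<and> c (\<tau> i) = colt k \<alpha> (\<tau> j)"
      then obtain j where j: "0 < j" "j < k" "c (\<tau> i) = colt k \<alpha> (\<tau> j)" by blast
      have "\<tau> j \<noteq> \<alpha>" unfolding \<alpha>_def using j ti by force
      then show ?thesis using colt_range[of "\<tau> j" k \<alpha>] j tl i by auto
    qed
  qed
  define T where "T = {i. i < k \<and> r i < k-1}"
  have Tdc: "T = {..<card T}"
  proof (rule down_closed[of T k])
    show "T \<subseteq> {..<k}" unfolding T_def by auto
    fix i i' assume "i \<in> T" "i' < i"
    then have "r i' < r i" using rs unfolding T_def by (intro strict_mono_onD[OF rs]) auto
    then show "i' \<in> T" using \<open>i \<in> T\<close> \<open>i' < i\<close> unfolding T_def by auto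
  qed
  define t where "t = card T"
  have Tt: "r i < k-1 \<longleftrightarrow> i < t" if "i < k" for i
  proof -
    have "r i < k-1 \<longleftrightarrow> i \<in> T" unfolding T_def using that by auto
    also have "\<dots> \<longleftrightarrow> i < t" using Tdc unfolding t_def by (metis lessThan_iff)
    finally show ?thesis .
  qed
  have "T \<subseteq> {..<k}" unfolding T_def by auto
  then have "t \<le> k" unfolding t_def using card_mono[of "{..<k}" T] by auto
  have gap: "\<And>i j. i \<le> j \<Longrightarrow> j < k \<Longrightarrow> r i + (j - i) \<le> r j" using smono_gap[OF rs] .
  consider "t = 0" | "t = 1" | "t = k-1" | "t = k" | "2 \<le> t \<and> t+2 \<le> k" using \<open>t \<le> k\<close> k4 by linarith
  then show False
  proof cases
    case 1
    have "\<not> r 0 < k-1" using Tt[of 0] 1 k4 by auto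
    then obtain j where "0 < j" "r 0 = k-1+j" using HC[of 0] k4 by auto
    moreover have "\<not> r (k-1) < k-1" using Tt[of "k-1"] 1 k4 by auto
    then obtain j' where "j' < k" "r (k-1) = k-1+j'" using HC[of "k-1"] k4 by auto
    moreover have "r 0 + (k-1) \<le> r (k-1)" using gap[of 0 "k-1"] k4 by auto
    ultimately show False by linarith
  next
    case 2
    have r1: "k \<le> r 1"
    proof -
      have "\<not> r 1 < k-1" using Tt[of 1] 2 k4 by auto
      then obtain j where "0 < j" "r 1 = k-1+j" using HC[of 1] k4 by auto
      then show ?thesis by linarith
    qed
    have rk: "r (k-1) \<le> 2*k-2"
    proof -
      have "\<not> r (k-1) < k-1" using Tt[of "k-1"] 2 k4 by auto
      then obtain j where "j < k" "r (k-1) = k-1+j" using HC[of "k-1"] k4 by auto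
      then show ?thesis by linarith
    qed
    have ct: "c (\<tau> i) = colt k \<alpha> (\<tau> i)" if hi: "1 \<le> i" "i < k" for i
    proof -
      have "\<not> r i < k-1" using Tt[of i] 2 hi by auto
      then obtain j where j: "r i = k-1+j" "c (\<tau> i) = colt k \<alpha> (\<tau> j)" using HC[of i] hi by auto
      have "r 1 + (i - 1) \<le> r i" using gap[of 1 i] hi by auto
      moreover have "r i + (k-1-i) \<le> r (k-1)" using gap[of i "k-1"] hi by auto
      ultimately have "j = i" using r1 rk j(1) hi by linarith
      then show ?thesis using j by simp
    qed
    have "\<alpha> - 1 < k" using \<alpha>k by linarith
    then obtain i1 where i1: "i1 < k" "\<tau> i1 = \<alpha> - 1" using perm_surj[OF perm] by blast
    have "i1 \<noteq> 0"
    proof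
      assume "i1 = 0"
      then have "\<alpha> = \<alpha> - 1" using i1 unfolding \<alpha>_def by simp
      then show False using cf' by linarith
    qed
    then have c1: "c (\<alpha> - 1) = 2*k" using ct[of i1] i1 colt_vals(1)[of \<alpha> k] cf' by auto
    have "\<alpha> + 1 < k" using \<alpha>k cf' by linarith
    then obtain i2 where i2: "i2 < k" "\<tau> i2 = \<alpha> + 1" using perm_surj[OF perm] by blast
    have "i2 \<noteq> 0"
    proof
      assume "i2 = 0"
      then show False using i2 unfolding \<alpha>_def by simp
    qed
    then have c2: "c (\<alpha> + 1) = 2*k+2" using ct[of i2] i2 colt_vals(3)[of k \<alpha>] by auto
    have "c (\<alpha> - 1) < c \<alpha>" using cf' \<alpha>k by (intro strict_mono_onD[OF cs]) auto
    moreover have "c \<alpha> < c (\<alpha> + 1)" using cf' \<alpha>k by (intro strict_mono_onD[OF cs]) auto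
    moreover have "c \<alpha> \<noteq> 2*k+1" using cne \<alpha>k by auto
    ultimately show False using c1 c2 by linarith
  next
    case 3
    have rid: "r i = i" if "i < k-1" for i
    proof -
      have "r 0 + i \<le> r i" using gap[of 0 i] that by auto
      moreover have "r i + (k-2-i) \<le> r (k-2)" using gap[of i "k-2"] that k4 by auto
      moreover have "r (k-2) < k-1" using Tt[of "k-2"] 3 k4 by auto
      ultimately show ?thesis using that by linarith
    qed
    have cb: "c (\<tau> i) = colb k \<beta> (\<tau> i)" if "i < k-1" for i
    proof -
      have "r i < k-1" using rid that by auto
      moreover have "i < k" using that by linarith
      ultimately have "c (\<tau> i) = colb k \<beta> (\<tau> (r i))" using HC[of i] by auto
      then show ?thesis using rid that by simp
    qed
    have "\<beta> - 1 < k" using \<beta>k by linarith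
    then obtain i1 where i1: "i1 < k" "\<tau> i1 = \<beta> - 1" using perm_surj[OF perm] by blast
    have "i1 \<noteq> k-1"
    proof
      assume "i1 = k-1"
      then have "\<beta> = \<beta> - 1" using i1 unfolding \<beta>_def by simp
      then show False using cf' by linarith
    qed
    then have c1: "c (\<beta> - 1) = 2*k" using cb[of i1] i1 colb_vals(1)[of \<beta> k] cf' by auto
    have "\<beta> + 1 < k" using \<beta>k cf' by linarith
    then obtain i2 where i2: "i2 < k" "\<tau> i2 = \<beta> + 1" using perm_surj[OF perm] by blast
    have "i2 \<noteq> k-1"
    proof
      assume "i2 = k-1"
      then show False using i2 unfolding \<beta>_def by simp
    qed
    then have c2: "c (\<beta> + 1) = 2*k+2" using cb[of i2] i2 colb_vals(3)[of k \<beta>] by auto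
    have "c (\<beta> - 1) < c \<beta>" using cf' \<beta>k by (intro strict_mono_onD[OF cs]) auto
    moreover have "c \<beta> < c (\<beta> + 1)" using cf' \<beta>k by (intro strict_mono_onD[OF cs]) auto
    moreover have "c \<beta> \<noteq> 2*k+1" using cne \<beta>k by auto
    ultimately show False using c1 c2 by linarith
  next
    case 4
    have "r (k-1) < k-1" using Tt[of "k-1"] 4 k4 by auto
    moreover have "r 0 + (k-1) \<le> r (k-1)" using gap[of 0 "k-1"] k4 by auto
    ultimately show False by linarith
  next
    case 5
    define V where "V = \<tau> ` {..<t}"
    have Vc: "k \<le> c u \<and> c u < 3*k+3" if uV: "u \<in> V" for u
    proof -
      obtain i where i: "i < t" "u = \<tau> i" using uV unfolding V_def by auto
      have ik: "i < k" using i 5 by auto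
      then have "r i < k-1" using Tt i by auto
      then have h: "c (\<tau> i) = colb k \<beta> (\<tau> (r i))" using HC[OF ik] by auto
      have "\<tau> (r i) \<noteq> \<beta>" unfolding \<beta>_def using \<open>r i < k-1\<close> ti by force
      moreover have "\<tau> (r i) < k" using tl \<open>r i < k-1\<close> by auto
      ultimately show ?thesis using colb_range[of "\<tau> (r i)" k \<beta>] h i by auto
    qed
    have Wc: "c u < k \<or> c u = 2*k \<or> c u = 2*k+2 \<or> 3*k+3 \<le> c u" if uk: "u < k" and uV: "u \<notin> V" for u
    proof -
      obtain i where i: "i < k" "\<tau> i = u" using perm_surj[OF perm uk] by blast
      have "\<not> i < t" using i uV unfolding V_def by auto
      then have "\<not> r i < k-1" using Tt i by auto
      then obtain j where j: "0 < j" "j < k" "c (\<tau> i) = colt k \<alpha> (\<tau> j)" using HC[OF i(1)] by auto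
      have "\<tau> j \<noteq> \<alpha>" unfolding \<alpha>_def using j ti by force
      then show ?thesis using colt_range[of "\<tau> j" k \<alpha>] j tl i by auto
    qed
    define M where "M = {u. u < k \<and> k \<le> c u \<and> c u < 3*k+3}"
    have VM: "V \<subseteq> M" unfolding M_def using Vc tl unfolding V_def using 5 by auto
    have finM: "finite M" unfolding M_def by auto
    have "\<tau> 0 \<in> V" unfolding V_def using 5 by auto
    then have Mne: "M \<noteq> {}" using VM by auto
    have Mconv: "u \<in> M" if "a \<in> M" "b \<in> M" "a < u" "u < b" for a b u
    proof -
      have "u < k" using that unfolding M_def by auto
      moreover have "c a < c u" using that \<open>u < k\<close> by (intro strict_mono_onD[OF cs]) (auto simp: M_def)
      moreover have "c u < c b" using that \<open>u < k\<close> by (intro strict_mono_onD[OF cs]) (auto simp: M_def)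
      ultimately show ?thesis using that unfolding M_def by auto
    qed
    define a where "a = Min M"
    define b where "b = Max M + 1"
    have Mab0: "M = {Min M..<Max M + 1}"
    proof (rule convex_interval[OF finM Mne])
      fix a b u assume "a \<in> M" "b \<in> M" "a < u" "u < b" then show "u \<in> M" by (rule Mconv)
    qed
    have Mab: "M = {a..<b}" unfolding a_def b_def using Mab0 .
    have "Max M \<in> M" using finM Mne by simp
    then have "Max M < k" unfolding M_def by blast
    then have bk: "b \<le> k" unfolding b_def by simp
    define X where "X = M - V"
    have Xc: "c x = 2*k \<or> c x = 2*k+2" if "x \<in> X" for x
      using that Wc[of x] unfolding X_def M_def by auto
    have Xk: "\<And>x. x \<in> X \<Longrightarrow> x < k" unfolding X_def M_def by auto
    have cinj: "\<And>x y. x < k \<Longrightarrow> y < k \<Longrightarrow> c x = c y \<Longrightarrow> x = y" using smono_inj[OF cs] by blast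
    have "\<exists>x m. m \<le> 2 \<and> X = {x..<x+m}"
    proof (cases "X = {}")
      case True then show ?thesis by (intro exI[of _ 0]) auto
    next
      case False
      then obtain x0 where x0: "x0 \<in> X" by auto
      show ?thesis
      proof (cases "\<exists>x1\<in>X. \<exists>x2\<in>X. c x1 = 2*k \<and> c x2 = 2*k+2")
        case True
        then obtain x1 x2 where x12: "x1 \<in> X" "x2 \<in> X" "c x1 = 2*k" "c x2 = 2*k+2" by blast
        have "x1 < x2" using smono_less_iff[OF cs, of x1 x2] x12 Xk by auto
        have "x2 = x1 + 1"
        proof (rule ccontr)
          assume "x2 \<noteq> x1 + 1"
          then have "x1 + 1 < x2" using \<open>x1 < x2\<close> by auto
          have x2k: "x2 < k" using Xk x12 by blast
          have "c x1 < c (x1+1)" using x2k \<open>x1 + 1 < x2\<close> by (intro strict_mono_onD[OF cs]) auto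
          moreover have "c (x1+1) < c x2" using x2k \<open>x1 + 1 < x2\<close> by (intro strict_mono_onD[OF cs]) auto
          ultimately have "c (x1+1) = 2*k+1" using x12 by linarith
          then show False using cne[of "x1+1"] \<open>x1 + 1 < x2\<close> Xk[OF x12(2)] by auto
        qed
        have "X = {x1, x2}"
        proof
          show "X \<subseteq> {x1, x2}"
          proof
            fix y assume "y \<in> X"
            then have "c y = c x1 \<or> c y = c x2" using Xc x12 by auto
            then show "y \<in> {x1, x2}" using cinj Xk \<open>y \<in> X\<close> x12 by blast
          qed
          show "{x1, x2} \<subseteq> X" using x12 by auto
        qed
        then have "X = {x1..<x1+2}" using \<open>x2 = x1 + 1\<close> by auto
        then show ?thesis by (intro exI[of _ x1] exI[of _ 2]) auto
      next
        case False
        have "X = {x0}"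
        proof
          show "X \<subseteq> {x0}"
          proof
            fix y assume "y \<in> X"
            then have "c y = c x0" using Xc x0 False by metis
            then show "y \<in> {x0}" using cinj Xk \<open>y \<in> X\<close> x0 by blast
          qed
          show "{x0} \<subseteq> X" using x0 by auto
        qed
        then have "X = {x0..<x0+1}" by auto
        then show ?thesis by (intro exI[of _ x0] exI[of _ 1]) auto
      qed
    qed
    then obtain x m where xm: "m \<le> 2" "X = {x..<x+m}" by blast
    have cardV: "card V = t" unfolding V_def
      by (subst card_image) (auto intro: inj_onI ti)
    have "card M = card V + card X" unfolding X_def using VM finM
      by (metis card_Diff_subset card_mono finite_subset le_add_diff_inverse)
    then have "b - a = t + m" using Mab cardV xm by simp
    then have bab: "b = a + t + m" using 5 by arith
    define d where "d = (if m = 0 then 0 else x - a)"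
    have Xd: "X = {a+d..<a+d+m}" and dt: "d \<le> t"
    proof -
      have "X = {a+d..<a+d+m} \<and> d \<le> t"
      proof (cases "m = 0")
        case True then show ?thesis using xm d_def by auto
      next
        case False
        have "x \<in> X" "x + m - 1 \<in> X" using xm False by auto
        then have "a \<le> x" "x + m - 1 < b" unfolding X_def using Mab by auto
        then show ?thesis using xm False d_def bab by auto
      qed
      then show "X = {a+d..<a+d+m}" "d \<le> t" by auto
    qed
    have "V = M - X" unfolding X_def using VM by auto
    then have "V = {a..<a+t+m} - {a+d..<a+d+m}" using Mab bab Xd by simp
    moreover have "(a, m, d) \<in> {..k-t} \<times> {..2::nat} \<times> {..t}" using bab bk xm dt by auto
    ultimately have "V \<in> Fam k t" unfolding Fam_def by (auto intro!: image_eqI[of _ _ "(a, m, d)"])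
    then have "badmid k \<tau>" unfolding badmid_def V_def using 5 by auto
    then show False using nb by simp
  qed
qed

definition Core :: "nat \<Rightarrow> (nat \<Rightarrow> nat) \<Rightarrow> (nat \<times> nat) set" where
  "Core k \<sigma> = (\<lambda>(p,q). (p, 4*k+3+q)) ` Hg k \<sigma> \<union> (\<lambda>(p,q). (2*k+q, p)) ` Hg k (inv \<sigma>)"

definition good :: "nat \<Rightarrow> (nat \<Rightarrow> nat) \<Rightarrow> bool" where
  "good k \<sigma> \<longleftrightarrow> cornerfree k \<sigma> \<and> cornerfree k (inv \<sigma>) \<and> \<not> badmid k \<sigma> \<and> \<not> badmid k (inv \<sigma>)"

lemma Hg_bounds:
  assumes perm: "\<tau> permutes {..<k}" and k1: "1 \<le> k" and pq: "(p, q) \<in> Hg k \<tau>"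
  shows "p < 2*k \<and> q \<le> 4*k+2 \<and> q \<noteq> 2*k+1"
  using Hg_cases[OF pq]
proof
  assume h: "p < k-1 \<and> q = colb k (\<tau> (k-1)) (\<tau> p)"
  have "\<tau> p \<noteq> \<tau> (k-1)" using h perm_inj[OF perm, of p "k-1"] by auto
  moreover have "\<tau> p < k" using perm_lt[OF perm] h by auto
  ultimately show ?thesis using colb_range[of "\<tau> p" k "\<tau> (k-1)"] h by auto
next
  assume "\<exists>j. 0 < j \<and> j < k \<and> p = k-1+j \<and> q = colt k (\<tau> 0) (\<tau> j)"
  then obtain j where j: "0 < j" "j < k" "p = k-1+j" "q = colt k (\<tau> 0) (\<tau> j)" by blast
  have "\<tau> j \<noteq> \<tau> 0" using j perm_inj[OF perm, of j 0] by auto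
  moreover have "\<tau> j < k" using perm_lt[OF perm] j by auto
  ultimately show ?thesis using colt_range[of "\<tau> j" k "\<tau> 0"] j by auto
qed

lemma Core_sub:
  assumes perm: "\<sigma> permutes {..<k}" and k1: "1 \<le> k"
  shows "Core k \<sigma> \<subseteq> {..<8*k+6} \<times> {..<8*k+6}"
    and "\<And>p q. (p, q) \<in> Core k \<sigma> \<Longrightarrow> p \<noteq> 4*k+1 \<and> q \<noteq> 6*k+4"
proof -
  have pi: "inv \<sigma> permutes {..<k}" using permutes_inv[OF perm] .
  show "Core k \<sigma> \<subseteq> {..<8*k+6} \<times> {..<8*k+6}"
    unfolding Core_def using Hg_bounds[OF perm k1] Hg_bounds[OF pi k1] by fastforce
  show "\<And>p q. (p, q) \<in> Core k \<sigma> \<Longrightarrow> p \<noteq> 4*k+1 \<and> q \<noteq> 6*k+4"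
    unfolding Core_def using Hg_bounds[OF perm k1] Hg_bounds[OF pi k1] by fastforce
qed

lemma H_sat:
  assumes perm: "\<tau> permutes {..<k}" and k1: "1 \<le> k"
  shows "\<exists>r c. emb (insert (x, 2*k+1) (Hg k \<tau>)) \<tau> k r c"
proof (cases "k-1 \<le> x")
  case True
  define r where "r i = (if i < k-1 then i else x)" for i
  have "strict_mono_on {..<k} r"
    by (intro strict_mono_onI) (use True in \<open>auto simp: r_def\<close>)
  moreover have "(r i, colb k (\<tau> (k-1)) (\<tau> i)) \<in> insert (x, 2*k+1) (Hg k \<tau>)" if "i < k" for i
  proof (cases "i < k-1")
    case True then show ?thesis unfolding Hg_def r_def by auto
  next
    case False then have "i = k-1" using that by auto
    then show ?thesis unfolding r_def using colb_vals(2)[of k "\<tau> (k-1)"] by auto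
  qed
  ultimately show ?thesis unfolding emb_def using colb_smono by blast
next
  case False
  define r where "r i = (if i = 0 then x else k-1+i)" for i
  have "strict_mono_on {..<k} r"
    by (intro strict_mono_onI) (use False in \<open>auto simp: r_def\<close>)
  moreover have "(r i, colt k (\<tau> 0) (\<tau> i)) \<in> insert (x, 2*k+1) (Hg k \<tau>)" if "i < k" for i
  proof (cases "i = 0")
    case False then show ?thesis unfolding Hg_def r_def using that by auto
  next
    case True
    then show ?thesis unfolding r_def using colt_vals(2)[of k "\<tau> 0"] by auto
  qed
  ultimately show ?thesis unfolding emb_def using colt_smono by blast
qed

lemma Core_colsat:
  assumes perm: "\<sigma> permutes {..<k}" and k1: "1 \<le> k" and x: "x < 8*k+6"
  shows "contains (8*k+6) (8*k+6) (insert (x, 6*k+4) (Core k \<sigma>)) k k (perm_matrix k \<sigma>)"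
proof -
  obtain r c where e: "emb (insert (x, 2*k+1) (Hg k \<sigma>)) \<sigma> k r c" using H_sat[OF perm k1] by blast
  have "emb (insert (x, 6*k+4) (Core k \<sigma>)) \<sigma> k r (\<lambda>v. 4*k+3 + c v)"
    unfolding emb_def
  proof (intro conjI allI impI)
    show "strict_mono_on {..<k} r" using e unfolding emb_def by auto
    show "strict_mono_on {..<k} (\<lambda>v. 4*k+3 + c v)" using e unfolding emb_def
      by (auto simp: monotone_on_def)
    fix i assume "i < k"
    then have "(r i, c (\<sigma> i)) \<in> insert (x, 2*k+1) (Hg k \<sigma>)" using e unfolding emb_def by auto
    then show "(r i, 4*k+3 + c (\<sigma> i)) \<in> insert (x, 6*k+4) (Core k \<sigma>)"
      unfolding Core_def by (auto intro: rev_image_eqI)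
  qed
  moreover have "insert (x, 6*k+4) (Core k \<sigma>) \<subseteq> {..<8*k+6} \<times> {..<8*k+6}"
    using Core_sub(1)[OF perm k1] x by auto
  ultimately show ?thesis using contains_perm_iff[OF perm] by blast
qed

lemma Core_rowsat:
  assumes perm: "\<sigma> permutes {..<k}" and k1: "1 \<le> k" and y: "y < 8*k+6"
  shows "contains (8*k+6) (8*k+6) (insert (4*k+1, y) (Core k \<sigma>)) k k (perm_matrix k \<sigma>)"
proof -
  have pi: "inv \<sigma> permutes {..<k}" using permutes_inv[OF perm] .
  obtain r c where e: "emb (insert (y, 2*k+1) (Hg k (inv \<sigma>))) (inv \<sigma>) k r c"
    using H_sat[OF pi k1] by blast
  have "emb (insert (4*k+1, y) (Core k \<sigma>)) \<sigma> k (\<lambda>i. 2*k + c i) r"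
    unfolding emb_def
  proof (intro conjI allI impI)
    show "strict_mono_on {..<k} r" using e unfolding emb_def by auto
    show "strict_mono_on {..<k} (\<lambda>i. 2*k + c i)" using e unfolding emb_def
      by (auto simp: monotone_on_def)
    fix i assume "i < k"
    then have "\<sigma> i < k" using perm_lt[OF perm] by auto
    then have "(r (\<sigma> i), c (inv \<sigma> (\<sigma> i))) \<in> insert (y, 2*k+1) (Hg k (inv \<sigma>))"
      using e unfolding emb_def by auto
    then have "(r (\<sigma> i), c i) \<in> insert (y, 2*k+1) (Hg k (inv \<sigma>))"
      using permutes_inverses(2)[OF perm] by simp
    then show "(2*k + c i, r (\<sigma> i)) \<in> insert (4*k+1, y) (Core k \<sigma>)"
      unfolding Core_def by (auto intro: rev_image_eqI)
  qed
  moreover have "insert (4*k+1, y) (Core k \<sigma>) \<subseteq> {..<8*k+6} \<times> {..<8*k+6}"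
    using Core_sub(1)[OF perm k1] y by auto
  ultimately show ?thesis using contains_perm_iff[OF perm] by blast
qed

lemma Core_avoid:
  assumes perm: "\<sigma> permutes {..<k}" and k4: "4 \<le> k" and g: "good k \<sigma>"
    and e: "emb (Core k \<sigma>) \<sigma> k r c"
  shows False
proof -
  have pi: "inv \<sigma> permutes {..<k}" using permutes_inv[OF perm] .
  have k1: "1 \<le> k" using k4 by auto
  have rs: "strict_mono_on {..<k} r" and cs: "strict_mono_on {..<k} c"
    and mem: "\<And>i. i < k \<Longrightarrow> (r i, c (\<sigma> i)) \<in> Core k \<sigma>"
    using e unfolding emb_def by auto
  have top: "c (\<sigma> i) \<ge> 4*k+3 \<and> (r i, c (\<sigma> i) - (4*k+3)) \<in> Hg k \<sigma>" if "i < k" "r i < 2*k" for i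
  proof -
    have "(r i, c (\<sigma> i)) \<in> (\<lambda>(p,q). (p, 4*k+3+q)) ` Hg k \<sigma>"
      using mem[OF that(1)] that(2) unfolding Core_def by auto
    then show ?thesis by auto
  qed
  have bot: "c (\<sigma> i) < 2*k \<and> 2*k \<le> r i \<and> (c (\<sigma> i), r i - 2*k) \<in> Hg k (inv \<sigma>)"
    if "i < k" "\<not> r i < 2*k" for i
  proof -
    have "(r i, c (\<sigma> i)) \<in> (\<lambda>(p,q). (2*k+q, p)) ` Hg k (inv \<sigma>)"
      using mem[OF that(1)] that(2) Hg_bounds[OF perm k1] unfolding Core_def by fastforce
    then obtain p q where pq: "(p, q) \<in> Hg k (inv \<sigma>)" "r i = 2*k+q" "c (\<sigma> i) = p" by auto
    then show ?thesis using Hg_bounds[OF pi k1 pq(1)] by auto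
  qed
  define T where "T = {i. i < k \<and> r i < 2*k}"
  have Tdc: "T = {..<card T}"
  proof (rule down_closed[of T k])
    show "T \<subseteq> {..<k}" unfolding T_def by auto
    fix i i' assume "i \<in> T" "i' < i"
    then have "r i' < r i" unfolding T_def by (intro strict_mono_onD[OF rs]) auto
    then show "i' \<in> T" using \<open>i \<in> T\<close> \<open>i' < i\<close> unfolding T_def by auto
  qed
  define t where "t = card T"
  have Tt: "r i < 2*k \<longleftrightarrow> i < t" if "i < k" for i
  proof -
    have "r i < 2*k \<longleftrightarrow> i \<in> T" unfolding T_def using that by auto
    also have "\<dots> \<longleftrightarrow> i < t" using Tdc unfolding t_def by (metis lessThan_iff)
    finally show ?thesis .
  qed
  have "T \<subseteq> {..<k}" unfolding T_def by auto
  then have "t \<le> k" unfolding t_def using card_mono[of "{..<k}" T] by auto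
  have allv: "\<And>v. v < k \<Longrightarrow> \<exists>i<k. \<sigma> i = v" using perm_surj[OF perm] .
  consider "t = k" | "t = 0" | "0 < t \<and> t < k" using \<open>t \<le> k\<close> by linarith
  then show False
  proof cases
    case 1
    have big: "4*k+3 \<le> c v" if vk: "v < k" for v
    proof -
      obtain i where "i < k" "\<sigma> i = v" using allv vk by blast
      then show ?thesis using top[of i] Tt[of i] 1 by auto
    qed
    have "emb (Hg k \<sigma>) \<sigma> k r (\<lambda>v. c v - (4*k+3))"
      unfolding emb_def
    proof (intro conjI allI impI)
      show "strict_mono_on {..<k} r" by (rule rs)
      show "strict_mono_on {..<k} (\<lambda>v. c v - (4*k+3))"
      proof (intro strict_mono_onI)
        fix v w assume "v \<in> {..<k}" "w \<in> {..<k}" "v < w"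
        then have "c v < c w" "4*k+3 \<le> c v" using big strict_mono_onD[OF cs] by auto
        then show "c v - (4*k+3) < c w - (4*k+3)" by linarith
      qed
      fix i assume "i < k"
      then show "(r i, c (\<sigma> i) - (4*k+3)) \<in> Hg k \<sigma>" using top[of i] Tt[of i] 1 by auto
    qed
    then show False using H_avoid[OF perm k4] g unfolding good_def by blast
  next
    case 2
    have big: "2*k \<le> r i" if "i < k" for i using bot[OF that] Tt[OF that] 2 by auto
    have "emb (Hg k (inv \<sigma>)) (inv \<sigma>) k c (\<lambda>i. r i - 2*k)"
      unfolding emb_def
    proof (intro conjI allI impI)
      show "strict_mono_on {..<k} c" by (rule cs)
      show "strict_mono_on {..<k} (\<lambda>i. r i - 2*k)"
      proof (intro strict_mono_onI)
        fix v w assume "v \<in> {..<k}" "w \<in> {..<k}" "v < w"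
        then have "r v < r w" "2*k \<le> r v" using big strict_mono_onD[OF rs] by auto
        then show "r v - 2*k < r w - 2*k" by linarith
      qed
      fix j assume j: "j < k"
      define i where "i = inv \<sigma> j"
      have ik: "i < k" unfolding i_def using perm_lt[OF pi j] .
      have sj: "\<sigma> i = j" unfolding i_def using permutes_inverses(1)[OF perm] by simp
      show "(c j, r (inv \<sigma> j) - 2*k) \<in> Hg k (inv \<sigma>)"
        using bot[OF ik] Tt[OF ik] 2 sj unfolding i_def by auto
    qed
    then show False using H_avoid[OF pi k4] g unfolding good_def by blast
  next
    case 3
    define V where "V = \<sigma> ` {..<t}"
    have ord: "\<sigma> i' < \<sigma> i" if "i < t" "t \<le> i'" "i' < k" for i i'
    proof -
      have "c (\<sigma> i) \<ge> 4*k+3" using top[of i] Tt[of i] that by auto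
      moreover have "c (\<sigma> i') < 2*k" using bot[of i'] Tt[of i'] that by auto
      ultimately have "c (\<sigma> i') < c (\<sigma> i)" by linarith
      moreover have "\<sigma> i < k" "\<sigma> i' < k" using perm_lt[OF perm] that by auto
      ultimately show ?thesis using smono_less_iff[OF cs] by blast
    qed
    define W where "W = {u. u < k \<and> u \<notin> V}"
    have Wdc: "W = {..<card W}"
    proof (rule down_closed[of W k])
      show "W \<subseteq> {..<k}" unfolding W_def by auto
      fix u u' assume uW: "u \<in> W" and "u' < u"
      show "u' \<in> W"
      proof (rule ccontr)
        assume "u' \<notin> W"
        then have "u' \<in> V" using uW \<open>u' < u\<close> unfolding W_def by auto
        then obtain i where i: "i < t" "\<sigma> i = u'" unfolding V_def by auto
        obtain i' where i': "i' < k" "\<sigma> i' = u" using allv uW unfolding W_def by auto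
        have "\<not> i' < t" using i' uW unfolding W_def V_def by auto
        then have "\<sigma> i' < \<sigma> i" using ord[of i i'] i i' by auto
        then show False using i i' \<open>u' < u\<close> by auto
      qed
    qed
    have ti: "\<And>i j. \<sigma> i = \<sigma> j \<Longrightarrow> i = j" using perm_inj[OF perm] .
    have cardV: "card V = t" unfolding V_def by (subst card_image) (auto intro: inj_onI ti)
    have VW: "V \<subseteq> {..<k}" unfolding V_def using perm_lt[OF perm] 3 by auto
    have "W = {..<k} - V" unfolding W_def by auto
    then have "card W = k - t" using VW cardV by (simp add: card_Diff_subset finite_subset)
    then have Weq: "{..<k} - V = {..<k-t}" using Wdc \<open>W = {..<k} - V\<close> by auto
    have "V = {k-t..<k}"
    proof
      show "V \<subseteq> {k-t..<k}"
      proof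
        fix x assume "x \<in> V"
        then have "x < k" "x \<notin> {..<k} - V" using VW by auto
        then show "x \<in> {k-t..<k}" using Weq by auto
      qed
      show "{k-t..<k} \<subseteq> V"
      proof
        fix x assume "x \<in> {k-t..<k}"
        then have "x \<notin> {..<k-t}" "x < k" by auto
        then show "x \<in> V" using Weq by blast
      qed
    qed
    then have Veq: "\<sigma> ` {..<t} = {k-t..<k}" unfolding V_def .
    have cfs: "cornerfree k \<sigma>" and nbs: "\<not> badmid k \<sigma>" using g unfolding good_def by auto
    consider "t = 1" | "t = k-1" | "2 \<le> t \<and> t+2 \<le> k" using 3 k4 by linarith
    then show False
    proof cases
      case 1
      have "{k-1..<k} = {k-1}" using k4 by auto
      moreover have "\<sigma> ` {..<1} = {\<sigma> 0}" by auto
      ultimately have "\<sigma> 0 = k-1" using Veq 1 by auto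
      then show False using cfs unfolding cornerfree_def by auto
    next
      case 2
      have "\<sigma> (k-1) < k" using perm_lt[OF perm] k4 by auto
      moreover have "\<sigma> (k-1) \<notin> \<sigma> ` {..<t}" using 2 ti by auto
      ultimately have "\<sigma> (k-1) = 0" using Veq 2 by auto
      then show False using cfs unfolding cornerfree_def by auto
    next
      case 4: 3
      have "(k-t, 0, 0) \<in> {..k-t} \<times> {..2::nat} \<times> {..t}" by auto
      moreover have "\<sigma> ` {..<t} = {k-t..<k-t+t+0} - {k-t+0..<k-t+0+0}" using Veq 3 by auto
      ultimately have "\<sigma> ` {..<t} \<in> Fam k t" unfolding Fam_def
        by (auto intro!: image_eqI[of _ _ "(k-t, 0, 0)"])
      then show False using nbs 4 unfolding badmid_def by blast
    qed
  qed
qed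

lemma max_ext:
  assumes "finite Z" "C \<subseteq> Z" "\<not> contains m n C k k P"
  shows "\<exists>W. C \<subseteq> W \<and> W \<subseteq> Z \<and> \<not> contains m n W k k P \<and>
             (\<forall>z \<in> Z - W. contains m n (insert z W) k k P)"
  using assms(2,3)
proof (induction "card (Z - C)" arbitrary: C rule: less_induct)
  case less
  show ?case
  proof (cases "\<forall>z \<in> Z - C. contains m n (insert z C) k k P")
    case True
    then show ?thesis using less.prems by blast
  next
    case False
    then obtain z where z: "z \<in> Z - C" "\<not> contains m n (insert z C) k k P" by blast
    have "card (Z - insert z C) < card (Z - C)"
      using z(1) assms(1) by (metis Diff_insert card_Diff1_less finite_Diff)
    then obtain W where "insert z C \<subseteq> W \<and> W \<subseteq> Z \<and> \<not> contains m n W k k P \<and>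
             (\<forall>z \<in> Z - W. contains m n (insert z W) k k P)"
      using less.hyps[of "insert z C"] z less.prems by blast
    then show ?thesis by blast
  qed
qed

definition shr :: "nat \<Rightarrow> nat \<Rightarrow> nat \<Rightarrow> nat" where
  "shr i0 e x = (if x \<le> i0 then x else if x \<le> i0 + e then i0 else x - e)"

definition upr :: "nat \<Rightarrow> nat \<Rightarrow> nat \<Rightarrow> nat" where
  "upr i0 e p = (if p < i0 then p else p + e)"

lemma shr_lt: "x < N + e \<Longrightarrow> i0 < N \<Longrightarrow> shr i0 e x < N"
  unfolding shr_def by auto

lemma shr_mono: "x \<le> y \<Longrightarrow> shr i0 e x \<le> shr i0 e y"
  unfolding shr_def by auto

lemma shr_upr: "shr i0 e (upr i0 e p) = p"
  unfolding shr_def upr_def by auto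

lemma upr_lt: "p < N \<Longrightarrow> upr i0 e p < N + e"
  unfolding upr_def by auto

lemma upr_shr: "shr i0 e x \<noteq> i0 \<Longrightarrow> upr i0 e (shr i0 e x) = x"
  unfolding shr_def upr_def by auto

lemma shr_smono_aux:
  assumes "x < y" "shr i0 e x \<noteq> i0" "shr i0 e y \<noteq> i0"
  shows "shr i0 e x < shr i0 e y"
proof -
  have "shr i0 e x \<le> shr i0 e y" using shr_mono assms(1) by auto
  moreover have "shr i0 e x \<noteq> shr i0 e y"
  proof
    assume "shr i0 e x = shr i0 e y"
    then have "upr i0 e (shr i0 e x) = upr i0 e (shr i0 e y)" by simp
    then show False using upr_shr[OF assms(2)] upr_shr[OF assms(3)] assms(1) by simp
  qed
  ultimately show ?thesis by auto
qed

lemma section_smono: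
  assumes "\<And>p. p < N \<Longrightarrow> shr i0 e (s p) = p"
  shows "strict_mono_on {..<N} s"
proof (intro strict_mono_onI)
  fix p q assume "p \<in> {..<N}" "q \<in> {..<N}" "p < q"
  show "s p < s q"
  proof (rule ccontr)
    assume "\<not> s p < s q"
    then have "shr i0 e (s q) \<le> shr i0 e (s p)" using shr_mono by auto
    then show False using assms \<open>p \<in> {..<N}\<close> \<open>q \<in> {..<N}\<close> \<open>p < q\<close> by auto
  qed
qed

lemma smono_comp:
  assumes "strict_mono_on {..<N} s" "strict_mono_on {..<k} r" "\<And>i. i < k \<Longrightarrow> r i < N"
  shows "strict_mono_on {..<k} (s \<circ> r)"
  using assms by (auto simp: monotone_on_def)

lemma expansion:
  assumes perm: "\<sigma> permutes {..<k}" and k1: "1 \<le> k"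
    and sat: "saturating N W k (perm_matrix k \<sigma>)"
    and i0: "i0 < N" and j0: "j0 < N"
    and nol: "\<And>p q. (p, q) \<in> W \<Longrightarrow> p \<noteq> i0 \<and> q \<noteq> j0"
  shows "\<exists>E. saturating (N + e) E k (perm_matrix k \<sigma>) \<and> card E = card W"
proof -
  define n where "n = N + e"
  define P where "P = perm_matrix k \<sigma>"
  have WN: "W \<subseteq> {..<N} \<times> {..<N}" using sat unfolding saturating_def is_01_matrix_def by auto
  have Wav: "\<not> contains N N W k k P" using sat unfolding saturating_def P_def by auto
  have Wsat: "\<And>z. z \<in> {..<N} \<times> {..<N} - W \<Longrightarrow> contains N N (insert z W) k k P"
    using sat unfolding saturating_def P_def by auto
  define E where "E = (\<lambda>(p,q). (upr i0 e p, upr j0 e q)) ` W"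
  have Echar: "(x, y) \<in> E \<longleftrightarrow> x < n \<and> y < n \<and> (shr i0 e x, shr j0 e y) \<in> W" for x y
  proof
    assume "(x, y) \<in> E"
    then obtain p q where pq: "(p, q) \<in> W" "x = upr i0 e p" "y = upr j0 e q" unfolding E_def by auto
    then show "x < n \<and> y < n \<and> (shr i0 e x, shr j0 e y) \<in> W"
      using WN upr_lt shr_upr unfolding n_def by auto
  next
    assume h: "x < n \<and> y < n \<and> (shr i0 e x, shr j0 e y) \<in> W"
    then have "shr i0 e x \<noteq> i0" "shr j0 e y \<noteq> j0" using nol by auto
    then have "x = upr i0 e (shr i0 e x)" "y = upr j0 e (shr j0 e y)" using upr_shr by auto
    then show "(x, y) \<in> E" unfolding E_def using h by (auto intro!: image_eqI)
  qed
  have En: "E \<subseteq> {..<n} \<times> {..<n}" using Echar by auto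
  have cardE: "card E = card W"
    unfolding E_def
  proof (rule card_image)
    show "inj_on (\<lambda>(p,q). (upr i0 e p, upr j0 e q)) W"
    proof (rule inj_onI)
      fix a b assume "a \<in> W" "b \<in> W" and h: "(\<lambda>(p,q). (upr i0 e p, upr j0 e q)) a = (\<lambda>(p,q). (upr i0 e p, upr j0 e q)) b"
      obtain p q p' q' where ab: "a = (p, q)" "b = (p', q')" by (cases a, cases b) auto
      have "upr i0 e p = upr i0 e p'" "upr j0 e q = upr j0 e q'" using h ab by auto
      then have "shr i0 e (upr i0 e p) = shr i0 e (upr i0 e p')" "shr j0 e (upr j0 e q) = shr j0 e (upr j0 e q')" by auto
      then show "a = b" using ab shr_upr by simp
    qed
  qed
  have Eav: "\<not> contains n n E k k P"
  proof
    assume "contains n n E k k P"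
    then obtain r c where e: "emb E \<sigma> k r c" using contains_perm_iff[OF perm En] unfolding P_def by blast
    have rs: "strict_mono_on {..<k} r" and cs: "strict_mono_on {..<k} c"
      and mem: "\<And>i. i < k \<Longrightarrow> (r i, c (\<sigma> i)) \<in> E" using e unfolding emb_def by auto
    have memW: "\<And>i. i < k \<Longrightarrow> (shr i0 e (r i), shr j0 e (c (\<sigma> i))) \<in> W" using mem Echar by blast
    have "emb W \<sigma> k (shr i0 e \<circ> r) (shr j0 e \<circ> c)"
      unfolding emb_def
    proof (intro conjI allI impI)
      show "strict_mono_on {..<k} (shr i0 e \<circ> r)"
      proof (intro strict_mono_onI)
        fix i j assume "i \<in> {..<k}" "j \<in> {..<k}" "i < j"
        then have "r i < r j" using strict_mono_onD[OF rs] by auto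
        moreover have "shr i0 e (r i) \<noteq> i0" "shr i0 e (r j) \<noteq> i0"
          using memW nol \<open>i \<in> {..<k}\<close> \<open>j \<in> {..<k}\<close> by blast+
        ultimately show "(shr i0 e \<circ> r) i < (shr i0 e \<circ> r) j" using shr_smono_aux by auto
      qed
      show "strict_mono_on {..<k} (shr j0 e \<circ> c)"
      proof (intro strict_mono_onI)
        fix v w assume v: "v \<in> {..<k}" and w: "w \<in> {..<k}" and "v < w"
        then have "c v < c w" using strict_mono_onD[OF cs] by auto
        obtain i where i: "i < k" "\<sigma> i = v" using perm_surj[OF perm] v by blast
        obtain j where j: "j < k" "\<sigma> j = w" using perm_surj[OF perm] w by blast
        have "shr j0 e (c v) \<noteq> j0" "shr j0 e (c w) \<noteq> j0"
          using memW[OF i(1)] memW[OF j(1)] nol i j by blast+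
        then show "(shr j0 e \<circ> c) v < (shr j0 e \<circ> c) w" using shr_smono_aux \<open>c v < c w\<close> by auto
      qed
      fix i assume "i < k"
      then show "((shr i0 e \<circ> r) i, (shr j0 e \<circ> c) (\<sigma> i)) \<in> W" using memW by auto
    qed
    then have "contains N N W k k P" using contains_perm_iff[OF perm WN] unfolding P_def by blast
    then show False using Wav by simp
  qed
  have Esat: "contains n n (insert z E) k k P" if z: "z \<in> {..<n} \<times> {..<n} - E" for z
  proof -
    obtain x y where xy: "z = (x, y)" by (cases z)
    have xn: "x < n" "y < n" using z xy by auto
    have nW: "(shr i0 e x, shr j0 e y) \<notin> W" using z xy Echar xn by auto
    have inN: "(shr i0 e x, shr j0 e y) \<in> {..<N} \<times> {..<N}" using shr_lt xn i0 j0 unfolding n_def by auto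
    have WIN: "insert (shr i0 e x, shr j0 e y) W \<subseteq> {..<N} \<times> {..<N}" using WN inN by auto
    have "contains N N (insert (shr i0 e x, shr j0 e y) W) k k P" using Wsat nW inN by auto
    then obtain r c where e: "emb (insert (shr i0 e x, shr j0 e y) W) \<sigma> k r c"
      using contains_perm_iff[OF perm WIN] unfolding P_def by blast
    have rs: "strict_mono_on {..<k} r" and cs: "strict_mono_on {..<k} c"
      and mem: "\<And>i. i < k \<Longrightarrow> (r i, c (\<sigma> i)) \<in> insert (shr i0 e x, shr j0 e y) W"
      using e unfolding emb_def by auto
    have rN: "r i < N" if "i < k" for i using mem[OF that] WIN by auto
    have cN: "c v < N" if vk: "v < k" for v
    proof -
      obtain i where i: "i < k" "\<sigma> i = v" using perm_surj[OF perm] vk by blast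
      show ?thesis using mem[OF i(1)] WIN i by auto
    qed
    define s where "s p = (if p = shr i0 e x then x else upr i0 e p)" for p
    define u where "u q = (if q = shr j0 e y then y else upr j0 e q)" for q
    have s1: "shr i0 e (s p) = p" for p unfolding s_def using shr_upr by auto
    have u1: "shr j0 e (u q) = q" for q unfolding u_def using shr_upr by auto
    have s2: "s p < n" if "p < N" for p unfolding s_def using upr_lt that xn unfolding n_def by auto
    have u2: "u q < n" if "q < N" for q unfolding u_def using upr_lt that xn unfolding n_def by auto
    have ss: "strict_mono_on {..<N} s" using section_smono[of N i0 e s] s1 by blast
    have us: "strict_mono_on {..<N} u" using section_smono[of N j0 e u] u1 by blast
    have "emb (insert (x, y) E) \<sigma> k (s \<circ> r) (u \<circ> c)"
      unfolding emb_def
    proof (intro conjI allI impI)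
      show "strict_mono_on {..<k} (s \<circ> r)" using smono_comp[OF ss rs] rN by blast
      show "strict_mono_on {..<k} (u \<circ> c)" using smono_comp[OF us cs] cN by blast
      fix i assume ik: "i < k"
      show "((s \<circ> r) i, (u \<circ> c) (\<sigma> i)) \<in> insert (x, y) E"
      proof (cases "(r i, c (\<sigma> i)) = (shr i0 e x, shr j0 e y)")
        case True
        then show ?thesis unfolding s_def u_def by auto
      next
        case False
        then have "(r i, c (\<sigma> i)) \<in> W" using mem[OF ik] by auto
        moreover have "s (r i) < n" "u (c (\<sigma> i)) < n" using s2 u2 rN cN ik perm_lt[OF perm] by auto
        ultimately have "(s (r i), u (c (\<sigma> i))) \<in> E" using Echar s1 u1 by auto
        then show ?thesis by auto
      qed
    qed
    moreover have "insert (x, y) E \<subseteq> {..<n} \<times> {..<n}" using En xn by auto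
    ultimately show ?thesis using contains_perm_iff[OF perm] xy unfolding P_def by blast
  qed
  have "saturating n E k P" unfolding saturating_def is_01_matrix_def using En Eav Esat by blast
  then show ?thesis using cardE unfolding n_def P_def by blast
qed

lemma exists_saturating:
  assumes perm: "\<sigma> permutes {..<k}" and k1: "1 \<le> k"
  shows "\<exists>W. saturating n W k (perm_matrix k \<sigma>)"
proof -
  have "\<not> contains n n {} k k (perm_matrix k \<sigma>)"
  proof
    assume "contains n n {} k k (perm_matrix k \<sigma>)"
    moreover have "(0, \<sigma> 0) \<in> perm_matrix k \<sigma>" unfolding perm_matrix_def using k1 by auto
    ultimately show False unfolding contains_def by auto
  qed
  then have nc: "\<not> contains n n {} k k (perm_matrix k \<sigma>)" .
  have fin: "finite ({..<n} \<times> {..<n})" by simp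
  obtain W where "{} \<subseteq> W" "W \<subseteq> {..<n} \<times> {..<n}" "\<not> contains n n W k k (perm_matrix k \<sigma>)"
     "\<forall>z \<in> {..<n} \<times> {..<n} - W. contains n n (insert z W) k k (perm_matrix k \<sigma>)"
    using max_ext[OF fin empty_subsetI nc] by blast
  then show ?thesis unfolding saturating_def is_01_matrix_def by blast
qed

lemma sat_le: "saturating n A k P \<Longrightarrow> sat n k P \<le> card A"
  unfolding sat_def by (rule Least_le) (rule exI[of _ A], simp)

lemma sat_bounded_good:
  assumes perm: "\<sigma> permutes {..<k}" and k4: "4 \<le> k" and g: "good k \<sigma>"
  shows "sat_bounded k (perm_matrix k \<sigma>)"
proof -
  define N where "N = 8*k+6"
  define P where "P = perm_matrix k \<sigma>"
  have k1: "1 \<le> k" using k4 by auto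
  define Z where "Z = {..<N} \<times> {..<N} - ({4*k+1} \<times> UNIV \<union> UNIV \<times> {6*k+4})"
  have CZ: "Core k \<sigma> \<subseteq> Z" unfolding Z_def N_def using Core_sub[OF perm k1] by auto
  have CN: "Core k \<sigma> \<subseteq> {..<N} \<times> {..<N}" unfolding N_def using Core_sub[OF perm k1] by auto
  have Cav: "\<not> contains N N (Core k \<sigma>) k k P"
    using Core_avoid[OF perm k4 g] contains_perm_iff[OF perm CN] unfolding P_def by blast
  have finZ: "finite Z" unfolding Z_def by auto
  obtain W where W: "Core k \<sigma> \<subseteq> W" "W \<subseteq> Z" "\<not> contains N N W k k P"
    "\<forall>z \<in> Z - W. contains N N (insert z W) k k P"
    using max_ext[OF finZ CZ Cav] by blast
  have WN: "W \<subseteq> {..<N} \<times> {..<N}" using W(2) unfolding Z_def by auto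
  have Wsat: "saturating N W k P"
    unfolding saturating_def is_01_matrix_def
  proof (intro conjI ballI)
    show "W \<subseteq> {..<N} \<times> {..<N}" by (rule WN)
    show "\<not> contains N N W k k P" by (rule W(3))
    fix z assume z: "z \<in> {..<N} \<times> {..<N} - W"
    show "contains N N (insert z W) k k P"
    proof (cases "z \<in> Z")
      case True then show ?thesis using W(4) z by auto
    next
      case False
      then obtain x y where xy: "z = (x, y)" "x < N" "y < N" "x = 4*k+1 \<or> y = 6*k+4"
        using z unfolding Z_def by auto
      have "contains N N (insert z (Core k \<sigma>)) k k P"
      proof (cases "x = 4*k+1")
        case True
        then show ?thesis using xy(1,3) Core_rowsat[OF perm k1, of y] unfolding N_def P_def by simp
      next
        case False
        then have "y = 6*k+4" using xy(4) by simp
        then show ?thesis using xy(1,2) Core_colsat[OF perm k1, of x] unfolding N_def P_def by simp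
      qed
      then show ?thesis using contains_mono[of N N "insert z (Core k \<sigma>)" k k P "insert z W"] W(1) by auto
    qed
  qed
  have nol: "\<And>p q. (p, q) \<in> W \<Longrightarrow> p \<noteq> 4*k+1 \<and> q \<noteq> 6*k+4" using W(2) unfolding Z_def by auto
  have cW: "card W \<le> N * N"
    using card_mono[OF _ WN] by auto
  have "sat n k P \<le> N * N" for n
  proof (cases "N \<le> n")
    case True
    then obtain e where "n = N + e" using le_Suc_ex by blast
    moreover have "\<exists>E. saturating (N + e) E k P \<and> card E = card W"
      using expansion[OF perm k1 Wsat[unfolded P_def], of "4*k+1" "6*k+4" e] nol
      unfolding N_def P_def by simp
    then obtain E where E: "saturating (N + e) E k P" "card E = card W" by blast
    ultimately show ?thesis using sat_le[OF E(1)] E(2) cW by simp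
  next
    case False
    obtain A where A: "saturating n A k P" using exists_saturating[OF perm k1] unfolding P_def by blast
    then have "A \<subseteq> {..<n} \<times> {..<n}" unfolding saturating_def is_01_matrix_def by auto
    then have "card A \<le> n * n" using card_mono[of "{..<n} \<times> {..<n}" A] by auto
    also have "\<dots> \<le> N * N" using False by (simp add: mult_le_mono)
    finally show ?thesis using sat_le[OF A] by linarith
  qed
  then show ?thesis unfolding sat_bounded_def P_def by blast
qed

lemma fiber_card:
  assumes "t \<le> k"
  shows "card {\<sigma>. \<sigma> permutes {..<k} \<and> \<sigma> ` {..<t} = S} \<le> fact t * fact (k - t)"
proof (cases "{\<sigma>. \<sigma> permutes {..<k} \<and> \<sigma> ` {..<t} = S} = {}")
  case True then show ?thesis by (simp only: card.empty)
next
  case False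
  define Fb where "Fb = {\<sigma>. \<sigma> permutes {..<k} \<and> \<sigma> ` {..<t} = S}"
  obtain \<sigma>0 where s0: "\<sigma>0 permutes {..<k}" "\<sigma>0 ` {..<t} = S" using False by auto
  have cS: "card S = t" using s0 by (metis card_image card_lessThan inj_on_subset permutes_inj subset_UNIV)
  have Sk: "S \<subseteq> {..<k}" using s0 assms permutes_in_image by fastforce
  have cS2: "card ({..<k} - S) = k - t" using cS Sk by (simp add: card_Diff_subset finite_subset)
  define \<phi> where "\<phi> \<sigma> = (map \<sigma> [0..<t], map \<sigma> [t..<k])" for \<sigma> :: "nat \<Rightarrow> nat"
  have inj: "inj_on \<phi> Fb"
  proof (rule inj_onI)
    fix \<sigma> \<sigma>' assume h: "\<sigma> \<in> Fb" "\<sigma>' \<in> Fb" "\<phi> \<sigma> = \<phi> \<sigma>'"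
    show "\<sigma> = \<sigma>'"
    proof
      fix x
      show "\<sigma> x = \<sigma>' x"
      proof (cases "x < k")
        case False
        then have "\<sigma> x = x" "\<sigma>' x = x" using h(1,2) unfolding Fb_def by (auto simp: permutes_def)
        then show ?thesis by simp
      next
        case True
        show ?thesis
        proof (cases "x < t")
          case True
          have "\<forall>y\<in>{0..<t}. \<sigma> y = \<sigma>' y" using h(3) unfolding \<phi>_def by simp
          then show ?thesis using True by simp
        next
          case False
          have "\<forall>y\<in>{t..<k}. \<sigma> y = \<sigma>' y" using h(3) unfolding \<phi>_def by simp
          then show ?thesis using False \<open>x < k\<close> by simp
        qed
      qed
    qed
  qed
  have img: "\<phi> ` Fb \<subseteq> permutations_of_set S \<times> permutations_of_set ({..<k} - S)"
  proof
    fix y assume "y \<in> \<phi> ` Fb"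
    then obtain \<sigma> where s: "\<sigma> \<in> Fb" "y = \<phi> \<sigma>" by auto
    have p: "\<sigma> permutes {..<k}" "\<sigma> ` {..<t} = S" using s unfolding Fb_def by auto
    have injs: "inj \<sigma>" using permutes_inj[OF p(1)] .
    have im: "\<sigma> ` {..<k} = {..<k}" using permutes_image[OF p(1)] .
    have "set (map \<sigma> [0..<t]) = S" using p(2) by (simp add: atLeast0LessThan)
    moreover have "distinct (map \<sigma> [0..<t])" using injs by (simp add: distinct_map inj_on_subset[OF injs])
    moreover have "set (map \<sigma> [t..<k]) = {..<k} - S"
    proof -
      have e1: "{t..<k} = {..<k} - {..<t}" using assms by auto
      have "\<sigma> ` {t..<k} = \<sigma> ` {..<k} - \<sigma> ` {..<t}" unfolding e1 by (rule image_set_diff[OF injs])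
      then show ?thesis using im p(2) by simp
    qed
    moreover have "distinct (map \<sigma> [t..<k])" using injs by (simp add: distinct_map inj_on_subset[OF injs])
    ultimately show "y \<in> permutations_of_set S \<times> permutations_of_set ({..<k} - S)"
      using s(2) unfolding \<phi>_def permutations_of_set_def by auto
  qed
  have finS: "finite S" "finite ({..<k} - S)" using Sk finite_subset by auto
  have "card Fb \<le> card (permutations_of_set S \<times> permutations_of_set ({..<k} - S))"
    using card_inj_on_le[OF inj img] finS by simp
  also have "\<dots> = fact t * fact (k - t)" using finS cS cS2 by (simp add: card_cartesian_product)
  finally show ?thesis unfolding Fb_def .
qed

definition Ev :: "nat \<Rightarrow> nat \<Rightarrow> nat set set \<Rightarrow> (nat \<Rightarrow> nat) set" where
  "Ev k t F = {\<sigma>. \<sigma> permutes {..<k} \<and> \<sigma> ` {..<t} \<in> F}"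

lemma Ev_card:
  assumes "t \<le> k" "finite F"
  shows "card (Ev k t F) \<le> card F * (fact t * fact (k - t))"
proof -
  have "Ev k t F = (\<Union>S\<in>F. {\<sigma>. \<sigma> permutes {..<k} \<and> \<sigma> ` {..<t} = S})" unfolding Ev_def by auto
  then have "card (Ev k t F) \<le> (\<Sum>S\<in>F. card {\<sigma>. \<sigma> permutes {..<k} \<and> \<sigma> ` {..<t} = S})"
    using card_UN_le[OF assms(2)] by simp
  also have "\<dots> \<le> (\<Sum>S\<in>F. fact t * fact (k - t))"
    by (rule sum_mono) (rule fiber_card[OF assms(1)])
  also have "\<dots> = card F * (fact t * fact (k - t))" by simp
  finally show ?thesis .
qed

lemma Fam_card: "card (Fam k t) \<le> Suc (k - t) * (3 * Suc t)"
proof -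
  have "card (Fam k t) \<le> card ({..k-t} \<times> {..2::nat} \<times> {..t})"
    unfolding Fam_def by (rule card_image_le) simp
  also have "\<dots> = Suc (k - t) * (3 * Suc t)" by (simp add: card_cartesian_product)
  finally show ?thesis .
qed

lemma finite_Fam: "finite (Fam k t)"
  unfolding Fam_def by simp

lemma choose2: "real (k choose 2) = real k * (real k - 1) / 2"
proof (cases "k < 2")
  case True then show ?thesis by (cases k) (auto simp: numeral_2_eq_2 less_Suc_eq)
next
  case False
  then obtain m where "k = m + 2" by (metis add.commute le_Suc_ex not_less)
  then show ?thesis by (simp add: binomial_fact fact_numeral field_simps)
qed

lemma choose3: "3 \<le> k \<Longrightarrow> real (k choose 3) = real k * (real k - 1) * (real k - 2) / 6"
proof -
  assume "3 \<le> k"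
  then obtain m where k: "k = m + 3" by (metis add.commute le_Suc_ex)
  have "real (k choose 3) = fact k / (fact 3 * fact (k - 3))" using binomial_fact[of 3 k] \<open>3 \<le> k\<close> by simp
  also have "fact k = (real m + 3) * (real m + 2) * (real m + 1) * fact m" unfolding k
    by (simp add: fact_Suc numeral_3_eq_3 numeral_2_eq_2 algebra_simps)
  finally have "real (k choose 3) = (real m + 3) * (real m + 2) * (real m + 1) * fact m / (6 * fact m)"
    unfolding k by (simp add: fact_numeral)
  also have "\<dots> = (real m + 3) * (real m + 2) * (real m + 1) / 6" by simp
  finally show ?thesis unfolding k by (simp add: field_simps)
qed

lemma choose4: "4 \<le> k \<Longrightarrow> real (k choose 4) = real k * (real k - 1) * (real k - 2) * (real k - 3) / 24"
proof -
  assume "4 \<le> k"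
  then obtain m where k: "k = m + 4" by (metis add.commute le_Suc_ex)
  have "real (k choose 4) = fact k / (fact 4 * fact (k - 4))" using binomial_fact[of 4 k] \<open>4 \<le> k\<close> by simp
  also have "fact k = (real m + 4) * (real m + 3) * (real m + 2) * (real m + 1) * fact m" unfolding k
    by (simp add: fact_Suc numeral_3_eq_3 numeral_2_eq_2 eval_nat_numeral algebra_simps)
  finally have "real (k choose 4) = (real m + 4) * (real m + 3) * (real m + 2) * (real m + 1) * fact m / (24 * fact m)"
    unfolding k by (simp add: fact_numeral)
  also have "\<dots> = (real m + 4) * (real m + 3) * (real m + 2) * (real m + 1) / 24" by simp
  finally show ?thesis unfolding k by (simp add: field_simps)
qed

lemma lim0: "(\<lambda>k::nat. 2 * (40 / real k + 72 / (real k - 1) + 72 * (real k + 2)^2 / ((real k - 1) * (real k - 2) * (real k - 3)))) \<longlonglongrightarrow> 0"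
  by real_asymp

definition B1 :: "nat \<Rightarrow> (nat \<Rightarrow> nat) set" where
  "B1 k = {\<sigma>. \<sigma> permutes {..<k} \<and> (\<not> cornerfree k \<sigma> \<or> badmid k \<sigma>)}"

lemma B1_sub:
  assumes k4: "4 \<le> k"
  shows "B1 k \<subseteq> Ev k 1 {{0}, {k-1}} \<union> Ev k (k-1) {{..<k} - {0}, {..<k} - {k-1}} \<union>
           (\<Union>t\<in>{2..k-2}. Ev k t (Fam k t))"
proof
  fix \<sigma> assume "\<sigma> \<in> B1 k"
  then have perm: "\<sigma> permutes {..<k}" and h: "\<not> cornerfree k \<sigma> \<or> badmid k \<sigma>" unfolding B1_def by auto
  have img1: "\<sigma> ` {..<1} = {\<sigma> 0}" by auto
  have img2: "\<sigma> ` {..<k-1} = {..<k} - {\<sigma> (k-1)}"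
  proof -
    have e1: "{..<k-1} = {..<k} - {k-1}" using k4 by auto
    have "\<sigma> ` {..<k-1} = \<sigma> ` {..<k} - \<sigma> ` {k-1}" unfolding e1
      by (rule image_set_diff[OF permutes_inj[OF perm]])
    then show ?thesis using permutes_image[OF perm] by simp
  qed
  consider "\<sigma> 0 = 0 \<or> \<sigma> 0 = k-1" | "\<sigma> (k-1) = 0 \<or> \<sigma> (k-1) = k-1" | "badmid k \<sigma>"
    using h unfolding cornerfree_def by blast
  then show "\<sigma> \<in> Ev k 1 {{0}, {k-1}} \<union> Ev k (k-1) {{..<k} - {0}, {..<k} - {k-1}} \<union>
           (\<Union>t\<in>{2..k-2}. Ev k t (Fam k t))"
  proof cases
    case 1 then show ?thesis using perm img1 unfolding Ev_def by auto
  next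
    case 2 then show ?thesis using perm img2 unfolding Ev_def by auto
  next
    case 3
    then obtain t where t: "2 \<le> t" "t + 2 \<le> k" "\<sigma> ` {..<t} \<in> Fam k t" unfolding badmid_def by blast
    then have "t \<in> {2..k-2}" by auto
    then show ?thesis using t perm unfolding Ev_def by blast
  qed
qed

definition phi :: "nat \<Rightarrow> nat \<Rightarrow> real" where
  "phi k t = 3 * (real (k - t) + 1) * (real t + 1) / real (k choose t)"

lemma fact_ratio:
  assumes "t \<le> k"
  shows "real (fact t * fact (k - t)) / real (fact k) = 1 / real (k choose t)"
proof -
  have "real (k choose t) = fact k / (fact t * fact (k - t))" using binomial_fact[OF assms] by simp
  moreover have "(fact k :: real) > 0" "(fact t :: real) > 0" "(fact (k-t) :: real) > 0" by auto
  moreover have "real (k choose t) > 0" using assms by simp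
  ultimately show ?thesis by (simp add: field_simps)
qed

lemma B1_card:
  assumes k8: "8 \<le> k"
  shows "real (card (B1 k)) / real (fact k) \<le> 4 / real k + (\<Sum>t\<in>{2..k-2}. phi k t)"
proof -
  have k4: "4 \<le> k" using k8 by auto
  have fk: "real (fact k) > 0" by simp
  have c1: "card (Ev k 1 {{0}, {k-1}}) \<le> 2 * fact (k-1)"
    using Ev_card[of 1 k "{{0}, {k-1}}"] k4 card_insert_le[of "{}" "{k-1}"]
    by (auto intro: order.trans[OF _ mult_le_mono1[of "card {{0}, {k-1}}" 2]])
  have c2: "card (Ev k (k-1) {{..<k} - {0}, {..<k} - {k-1}}) \<le> 2 * fact (k-1)"
  proof -
    have "card (Ev k (k-1) {{..<k} - {0}, {..<k} - {k-1}}) \<le> card {{..<k} - {0}, {..<k} - {k-1}} * (fact (k-1) * fact (k - (k-1)))"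
      using Ev_card[of "k-1" k] by auto
    also have "\<dots> \<le> 2 * (fact (k-1) * fact (k - (k-1)))"
      by (intro mult_le_mono1) (simp add: card_insert_le_m1)
    also have "\<dots> = 2 * fact (k-1)" using k4 by simp
    finally show ?thesis .
  qed
  have c3: "card (\<Union>t\<in>{2..k-2}. Ev k t (Fam k t)) \<le> (\<Sum>t\<in>{2..k-2}. card (Ev k t (Fam k t)))"
    by (rule card_UN_le) simp
  have c3': "real (card (Ev k t (Fam k t))) / real (fact k) \<le> phi k t" if t: "t \<in> {2..k-2}" for t
  proof -
    have tk: "t \<le> k" using t by auto
    have "card (Ev k t (Fam k t)) \<le> card (Fam k t) * (fact t * fact (k - t))"
      using Ev_card[OF tk finite_Fam] .
    also have "\<dots> \<le> Suc (k - t) * (3 * Suc t) * (fact t * fact (k - t))"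
      by (intro mult_le_mono1 Fam_card)
    finally have "real (card (Ev k t (Fam k t))) \<le> real (Suc (k - t) * (3 * Suc t)) * real (fact t * fact (k - t))"
      by (metis of_nat_le_iff of_nat_mult)
    then have "real (card (Ev k t (Fam k t))) / real (fact k) \<le>
        real (Suc (k - t) * (3 * Suc t)) * (real (fact t * fact (k - t)) / real (fact k))"
      using fk by (simp add: divide_right_mono)
    also have "\<dots> = real (Suc (k - t) * (3 * Suc t)) * (1 / real (k choose t))"
      by (simp only: fact_ratio[OF tk])
    also have "\<dots> = phi k t"
    proof -
      have e: "\<And>d::nat. real (Suc d * (3 * Suc t)) = 3 * (real d + 1) * (real t + 1)"
        by (simp add: algebra_simps)
      show ?thesis unfolding phi_def e[of "k-t"] by simp
    qed
    finally show ?thesis .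
  qed
  have "card (B1 k) \<le> card (Ev k 1 {{0}, {k-1}}) + card (Ev k (k-1) {{..<k} - {0}, {..<k} - {k-1}}) +
        card (\<Union>t\<in>{2..k-2}. Ev k t (Fam k t))"
  proof -
    have "finite (Ev k 1 {{0}, {k-1}} \<union> Ev k (k-1) {{..<k} - {0}, {..<k} - {k-1}} \<union>
           (\<Union>t\<in>{2..k-2}. Ev k t (Fam k t)))"
      by (rule finite_subset[of _ "{\<sigma>. \<sigma> permutes {..<k}}"]) (auto simp: Ev_def finite_permutations)
    then have "card (B1 k) \<le> card (Ev k 1 {{0}, {k-1}} \<union> Ev k (k-1) {{..<k} - {0}, {..<k} - {k-1}} \<union>
           (\<Union>t\<in>{2..k-2}. Ev k t (Fam k t)))" using card_mono[OF _ B1_sub[OF k4]] by blast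
    also have "\<dots> \<le> card (Ev k 1 {{0}, {k-1}}) + card (Ev k (k-1) {{..<k} - {0}, {..<k} - {k-1}}) +
        card (\<Union>t\<in>{2..k-2}. Ev k t (Fam k t))"
      using card_Un_le[of "Ev k 1 {{0}, {k-1}} \<union> Ev k (k-1) {{..<k} - {0}, {..<k} - {k-1}}" "\<Union>t\<in>{2..k-2}. Ev k t (Fam k t)"]
        card_Un_le[of "Ev k 1 {{0}, {k-1}}" "Ev k (k-1) {{..<k} - {0}, {..<k} - {k-1}}"] by linarith
    finally show ?thesis .
  qed
  also have "\<dots> \<le> 2 * fact (k-1) + 2 * fact (k-1) + (\<Sum>t\<in>{2..k-2}. card (Ev k t (Fam k t)))"
    using c1 c2 c3 by linarith
  finally have nb: "card (B1 k) \<le> 4 * fact (k-1) + (\<Sum>t\<in>{2..k-2}. card (Ev k t (Fam k t)))" by linarith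
  have "real (card (B1 k)) \<le> real (4 * fact (k-1) + (\<Sum>t\<in>{2..k-2}. card (Ev k t (Fam k t))))"
    using nb by (simp only: of_nat_le_iff)
  also have "\<dots> = real (4 * fact (k-1)) + (\<Sum>t\<in>{2..k-2}. real (card (Ev k t (Fam k t))))"
    by (simp only: of_nat_add of_nat_sum)
  finally have nb2: "real (card (B1 k)) \<le> real (4 * fact (k-1)) + (\<Sum>t\<in>{2..k-2}. real (card (Ev k t (Fam k t))))" .
  have "real (card (B1 k)) / real (fact k) \<le>
     (real (4 * fact (k-1)) + (\<Sum>t\<in>{2..k-2}. real (card (Ev k t (Fam k t))))) / real (fact k)"
    using nb2 fk by (intro divide_right_mono) auto
  also have "\<dots> = real (4 * fact (k-1)) / real (fact k) + (\<Sum>t\<in>{2..k-2}. real (card (Ev k t (Fam k t))) / real (fact k))"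
    by (simp only: add_divide_distrib sum_divide_distrib)
  also have "real (4 * fact (k-1)) / real (fact k) = 4 / real k"
  proof -
    have "fact k = k * fact (k-1)" using k4 fact_reduce[where 'a=nat, of k] by simp
    then show ?thesis using k4 by (simp add: field_simps)
  qed
  also have "(\<Sum>t\<in>{2..k-2}. real (card (Ev k t (Fam k t))) / real (fact k)) \<le> (\<Sum>t\<in>{2..k-2}. phi k t)"
    by (rule sum_mono) (rule c3')
  finally show ?thesis by simp
qed

lemma binom_ge:
  assumes "2*j \<le> k" "j \<le> t" "t \<le> k - j"
  shows "k choose j \<le> k choose t"
proof (cases "2*t \<le> k")
  case True then show ?thesis using binomial_mono[of j t k] assms by auto
next
  case False
  have "k choose t = k choose (k - t)" using assms by (intro binomial_symmetric) auto
  moreover have "k choose j \<le> k choose (k - t)" using binomial_mono[of j "k-t" k] assms False by auto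
  ultimately show ?thesis by simp
qed

lemma hq1: "(x::real) \<ge> 8 \<Longrightarrow> 3 * (x - 2) * 4 / (x * (x - 1) * (x - 2) / 6) = 72 / (x * (x - 1))"
proof -
  assume "x \<ge> 8"
  then have nz: "x \<noteq> 0" "x - 1 \<noteq> 0" "x - 2 \<noteq> 0" by auto
  have "3 * (x - 2) * 4 / (x * (x - 1) * (x - 2) / 6) = (72 * (x - 2)) / ((x * (x - 1)) * (x - 2))"
    by (simp add: field_simps)
  also have "\<dots> = 72 / (x * (x - 1))" by (rule nonzero_mult_divide_mult_cancel_right[OF nz(3)])
  finally show ?thesis .
qed
lemma hq2: "(x::real) \<ge> 8 \<Longrightarrow> 3 * (x - 1) * 3 / (x * (x - 1) / 2) = 18 / x"
proof -
  assume "x \<ge> 8"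
  then have nz: "x \<noteq> 0" "x - 1 \<noteq> 0" "x - 2 \<noteq> 0" by auto
  have "3 * (x - 1) * 3 / (x * (x - 1) / 2) = (18 * (x - 1)) / (x * (x - 1))"
    by (simp add: field_simps)
  also have "\<dots> = 18 / x" by (rule nonzero_mult_divide_mult_cancel_right[OF nz(2)])
  finally show ?thesis .
qed
lemma hq3: "(x::real) \<ge> 8 \<Longrightarrow> 3 * (x + 2)^2 / (x * (x - 1) * (x - 2) * (x - 3) / 24) = 72 * (x + 2)^2 / (x * (x - 1) * (x - 2) * (x - 3))"
  by (simp add: field_simps)
lemma hq4: "(x::real) \<ge> 8 \<Longrightarrow> x * (72 / (x * (x - 1)) + 72 * (x + 2)^2 / (x * (x - 1) * (x - 2) * (x - 3))) = 72 / (x - 1) + 72 * (x + 2)^2 / ((x - 1) * (x - 2) * (x - 3))"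
proof -
  assume "x \<ge> 8"
  then have nz: "x \<noteq> 0" by auto
  have "x * (72 / (x * (x - 1))) = 72 / (x - 1)" using nz by simp
  moreover have "x * (72 * (x + 2)^2 / (x * (x - 1) * (x - 2) * (x - 3))) = 72 * (x + 2)^2 / ((x - 1) * (x - 2) * (x - 3))"
    using nz by (simp add: mult.assoc)
  ultimately show ?thesis by (simp add: distrib_left)
qed

lemma phi_bound:
  assumes k8: "8 \<le> k"
  shows "(\<Sum>t\<in>{2..k-2}. phi k t) \<le> 36 / real k + 72 / (real k - 1) +
            72 * (real k + 2)^2 / ((real k - 1) * (real k - 2) * (real k - 3))"
proof -
  have rk: "real k \<ge> 8" using k8 by simp
  have nz: "real k \<noteq> 0" "real k - 1 \<noteq> 0" "real k - 2 \<noteq> 0" "real k - 3 \<noteq> 0" using rk by auto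
  have C2: "real (k choose 2) = real k * (real k - 1) / 2" by (rule choose2)
  have C3: "real (k choose 3) = real k * (real k - 1) * (real k - 2) / 6" using k8 by (intro choose3) auto
  have C4: "real (k choose 4) = real k * (real k - 1) * (real k - 2) * (real k - 3) / 24" using k8 by (intro choose4) auto
  have p2: "phi k 2 = 18 / real k"
  proof -
    have "real (k - 2) = real k - 2" using k8 by (simp add: of_nat_diff)
    then have "phi k 2 = 3 * (real k - 1) * 3 / (real k * (real k - 1) / 2)" unfolding phi_def C2 by simp
    also have "\<dots> = 18 / real k" using hq2[OF rk] .
    finally show ?thesis .
  qed
  have p2': "phi k (k-2) = 18 / real k"
  proof -
    have "k choose (k-2) = k choose 2" using k8 by (subst binomial_symmetric) auto
    moreover have "k - (k-2) = 2" using k8 by auto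
    moreover have "real (k - 2) = real k - 2" using k8 by (simp add: of_nat_diff)
    ultimately have "phi k (k-2) = 3 * (real k - 1) * 3 / (real k * (real k - 1) / 2)" unfolding phi_def by (simp add: C2)
    also have "\<dots> = 18 / real k" using hq2[OF rk] .
    finally show ?thesis .
  qed
  define \<psi> where "\<psi> = 72 / (real k * (real k - 1)) + 72 * (real k + 2)^2 / (real k * (real k - 1) * (real k - 2) * (real k - 3))"
  have t3: "72 / (real k * (real k - 1)) \<ge> 0" "72 * (real k + 2)^2 / (real k * (real k - 1) * (real k - 2) * (real k - 3)) \<ge> 0"
    using rk by auto
  have pmid: "phi k t \<le> \<psi>" if t: "t \<in> {3..k-3}" for t
  proof -
    have tk: "3 \<le> t" "t \<le> k - 3" using t by auto
    consider "t = 3" | "t = k-3" | "4 \<le> t \<and> t \<le> k-4" using tk by linarith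
    then show ?thesis
    proof cases
      case 1
      have "real (k - 3) = real k - 3" using k8 by (simp add: of_nat_diff)
      then have "phi k t = 3 * (real k - 2) * 4 / (real k * (real k - 1) * (real k - 2) / 6)"
        unfolding phi_def 1 C3 by simp
      also have "\<dots> = 72 / (real k * (real k - 1))" using hq1[OF rk] .
      finally show ?thesis unfolding \<psi>_def using t3 by linarith
    next
      case 2
      have "k choose (k-3) = k choose 3" using k8 by (subst binomial_symmetric) auto
      moreover have "k - (k-3) = 3" using k8 by auto
      moreover have "real (k - 3) = real k - 3" using k8 by (simp add: of_nat_diff)
      ultimately have "phi k t = 3 * (real k - 2) * 4 / (real k * (real k - 1) * (real k - 2) / 6)"
        unfolding phi_def 2 by (simp add: C3)
      also have "\<dots> = 72 / (real k * (real k - 1))" using hq1[OF rk] .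
      finally show ?thesis unfolding \<psi>_def using t3 by linarith
    next
      case 3
      have cge: "real (k choose 4) \<le> real (k choose t)" using binom_ge[of 4 k t] 3 k8 by auto
      have cpos: "real (k choose 4) > 0" using C4 rk by simp
      have num: "3 * (real (k - t) + 1) * (real t + 1) \<le> 3 * (real k + 2)^2"
      proof -
        have "real (k - t) + 1 \<le> real k + 2" "real t + 1 \<le> real k + 2" using 3 by auto
        then have "(real (k - t) + 1) * (real t + 1) \<le> (real k + 2) * (real k + 2)"
          by (intro mult_mono) auto
        then have "3 * ((real (k - t) + 1) * (real t + 1)) \<le> 3 * ((real k + 2) * (real k + 2))" by linarith
        then show ?thesis by (simp only: power2_eq_square mult.assoc)
      qed
      have "phi k t \<le> 3 * (real k + 2)^2 / real (k choose t)"
        unfolding phi_def using num cpos cge by (intro divide_right_mono) auto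
      also have "\<dots> \<le> 3 * (real k + 2)^2 / real (k choose 4)"
      proof (rule divide_left_mono)
        have ct: "real (k choose t) > 0" using cge cpos by linarith
        show "0 < real (k choose t) * real (k choose 4)" using mult_pos_pos[OF ct cpos] .
      qed (use cge in auto)
      also have "\<dots> = 72 * (real k + 2)^2 / (real k * (real k - 1) * (real k - 2) * (real k - 3))"
        unfolding C4 using hq3[OF rk] .
      finally show ?thesis unfolding \<psi>_def using t3 by linarith
    qed
  qed
  have split: "{2..k-2} = insert 2 (insert (k-2) {3..k-3})" using k8 by auto
  have "(\<Sum>t\<in>{2..k-2}. phi k t) = phi k 2 + (phi k (k-2) + (\<Sum>t\<in>{3..k-3}. phi k t))"
  proof -
    have n1: "k - 2 \<notin> {3..k-3}" "2 \<notin> insert (k-2) {3..k-3}" using k8 by auto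
    show ?thesis unfolding split using sum.insert[OF _ n1(2), of "phi k"] sum.insert[OF _ n1(1), of "phi k"] by simp
  qed
  also have "(\<Sum>t\<in>{3..k-3}. phi k t) \<le> real (card {3..k-3}) * \<psi>"
    using sum_bounded_above[of "{3..k-3}" "phi k" \<psi>] pmid by auto
  also have "\<dots> \<le> real k * \<psi>"
  proof (rule mult_right_mono)
    show "real (card {3..k-3}) \<le> real k" by simp
    show "0 \<le> \<psi>" unfolding \<psi>_def using t3 by linarith
  qed
  also have "real k * \<psi> = 72 / (real k - 1) + 72 * (real k + 2)^2 / ((real k - 1) * (real k - 2) * (real k - 3))"
    unfolding \<psi>_def using hq4[OF rk] .
  finally show ?thesis using p2 p2' by simp
qed

lemma lin_aux: "(1::real) \<le> a + 2 * b \<Longrightarrow> b \<le> c \<Longrightarrow> 1 - 2 * c \<le> a"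
  by linarith

lemma lower_bound:
  assumes k8: "8 \<le> k"
  shows "1 - 2 * (40 / real k + 72 / (real k - 1) + 72 * (real k + 2)^2 / ((real k - 1) * (real k - 2) * (real k - 3)))
     \<le> real (card {\<sigma>. \<sigma> permutes {..<k} \<and> sat_bounded k (perm_matrix k \<sigma>)}) / real (fact k)"
proof -
  have k4: "4 \<le> k" using k8 by auto
  define Pk where "Pk = {\<sigma>. \<sigma> permutes {..<k}}"
  define S where "S = {\<sigma>. \<sigma> permutes {..<k} \<and> sat_bounded k (perm_matrix k \<sigma>)}"
  have finP: "finite Pk" unfolding Pk_def by (simp add: finite_permutations)
  have cP: "card Pk = fact k" unfolding Pk_def using card_permutations[of "{..<k}" k] by simp
  have B1P: "B1 k \<subseteq> Pk" unfolding B1_def Pk_def by auto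
  have finB: "finite (B1 k)" using finite_subset[OF B1P finP] .
  have cov: "Pk \<subseteq> S \<union> B1 k \<union> inv ` B1 k"
  proof
    fix \<sigma> assume "\<sigma> \<in> Pk"
    then have perm: "\<sigma> permutes {..<k}" unfolding Pk_def by auto
    have pi: "inv \<sigma> permutes {..<k}" using permutes_inv[OF perm] .
    show "\<sigma> \<in> S \<union> B1 k \<union> inv ` B1 k"
    proof (cases "good k \<sigma>")
      case True
      then show ?thesis using sat_bounded_good[OF perm k4] perm unfolding S_def by auto
    next
      case False
      then consider "\<not> cornerfree k \<sigma> \<or> badmid k \<sigma>" | "\<not> cornerfree k (inv \<sigma>) \<or> badmid k (inv \<sigma>)"
        unfolding good_def by blast
      then show ?thesis
      proof cases
        case 1 then show ?thesis using perm unfolding B1_def by auto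
      next
        case 2
        then have "inv \<sigma> \<in> B1 k" using pi unfolding B1_def by auto
        moreover have "\<sigma> = inv (inv \<sigma>)" using permutes_inv_inv[OF perm] by simp
        ultimately show ?thesis by blast
      qed
    qed
  qed
  have "card Pk \<le> card (S \<union> B1 k \<union> inv ` B1 k)"
    by (rule card_mono[OF _ cov]) (use finB finP in \<open>auto simp: S_def Pk_def finite_permutations\<close>)
  also have "\<dots> \<le> card S + card (B1 k) + card (inv ` B1 k)"
    using card_Un_le[of "S \<union> B1 k" "inv ` B1 k"] card_Un_le[of S "B1 k"] by linarith
  also have "card (inv ` B1 k) \<le> card (B1 k)" by (rule card_image_le[OF finB])
  finally have "fact k \<le> card S + 2 * card (B1 k)" using cP by linarith
  then have r1: "real (fact k) \<le> real (card S) + 2 * real (card (B1 k))"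
    by (metis of_nat_le_iff of_nat_add of_nat_mult of_nat_numeral)
  have fk: "real (fact k) > 0" by simp
  have "1 \<le> real (card S) / real (fact k) + 2 * (real (card (B1 k)) / real (fact k))"
  proof -
    have "1 = real (fact k) / real (fact k)" using fk by simp
    also have "\<dots> \<le> (real (card S) + 2 * real (card (B1 k))) / real (fact k)"
      using r1 fk by (intro divide_right_mono) auto
    also have "\<dots> = real (card S) / real (fact k) + 2 * (real (card (B1 k)) / real (fact k))"
      by (simp add: add_divide_distrib)
    finally show ?thesis .
  qed
  moreover have "real (card (B1 k)) / real (fact k) \<le>
      40 / real k + 72 / (real k - 1) + 72 * (real k + 2)^2 / ((real k - 1) * (real k - 2) * (real k - 3))"
  proof -
    have "4 / real k + 36 / real k = 40 / real k" by (simp add: add_divide_distrib[symmetric])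
    then show ?thesis using B1_card[OF k8] phi_bound[OF k8] by linarith
  qed
  ultimately show ?thesis unfolding S_def by (rule lin_aux)
qed

lemma upper_bound:
  "real (card {\<sigma>. \<sigma> permutes {..<k} \<and> sat_bounded k (perm_matrix k \<sigma>)}) / real (fact k) \<le> 1"
proof -
  have "card {\<sigma>. \<sigma> permutes {..<k} \<and> sat_bounded k (perm_matrix k \<sigma>)} \<le> card {\<sigma>. \<sigma> permutes {..<k}}"
    by (rule card_mono) (auto simp: finite_permutations)
  also have "\<dots> = fact k" using card_permutations[of "{..<k}" k] by simp
  finally have "real (card {\<sigma>. \<sigma> permutes {..<k} \<and> sat_bounded k (perm_matrix k \<sigma>)}) \<le> real (fact k)"
    by (simp only: of_nat_le_iff)
  moreover have "real (fact k) > 0" by simp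
  ultimately show ?thesis by simp
qed

theorem theorem1:
  shows "(\<lambda>k. real (card {\<sigma>. \<sigma> permutes {..<k} \<and> sat_bounded k (perm_matrix k \<sigma>)})
                / real (fact k)) \<longlonglongrightarrow> 1"
proof (rule tendsto_sandwich[of "\<lambda>k. 1 - 2 * (40 / real k + 72 / (real k - 1) + 72 * (real k + 2)^2 / ((real k - 1) * (real k - 2) * (real k - 3)))" _ sequentially "\<lambda>k. 1"])
  show "\<forall>\<^sub>F k in sequentially. 1 - 2 * (40 / real k + 72 / (real k - 1) + 72 * (real k + 2)^2 / ((real k - 1) * (real k - 2) * (real k - 3)))
     \<le> real (card {\<sigma>. \<sigma> permutes {..<k} \<and> sat_bounded k (perm_matrix k \<sigma>)}) / real (fact k)"
    using lower_bound by (auto simp: eventually_sequentially intro!: exI[of _ 8])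
  show "\<forall>\<^sub>F k in sequentially. real (card {\<sigma>. \<sigma> permutes {..<k} \<and> sat_bounded k (perm_matrix k \<sigma>)}) / real (fact k) \<le> 1"
    using upper_bound by simp
  show "(\<lambda>k. 1 - 2 * (40 / real k + 72 / (real k - 1) + 72 * (real k + 2)^2 / ((real k - 1) * (real k - 2) * (real k - 3)))) \<longlonglongrightarrow> 1"
    using tendsto_diff[OF tendsto_const lim0, of 1] by simp
  show "(\<lambda>k. 1) \<longlonglongrightarrow> (1::real)" by simp
qed

end
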